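(* Let $M$ be a compact, connected, oriented $7$-manifold with $b^1(M)=0$ admitting torsion-free $G_2$-structures, with moduli space $(\mathscr M,\mathscr G)$, affine coordinates $x^a$, potential $\mathscr F$ and Yukawa coupling $\Xi$ as in the context, and let $\overline\nabla$ be the pull-back by $q\circ\Phi:\mathscr M\to S^2_+(H^3)^*$ of the Levi-Civita connection of $g_{S^2_+}$, viewed as a connection on the trivial bundle $\mathscr M\times S^2(H^3)^*$. Then for all $a,b$, \[ \overline\nabla_{\partial_a}\frac{\partial}{\partial x^b}=\nabla^{\mathscr G}_{\partial_a}\frac{\partial}{\partial x^b}+2e^{-\mathscr F/3}\,\nabla^{\mathscr G}_a\Xi_{bkl}\,dx^kdx^l, \] where $\frac{\partial}{\partial x^b}$ on the left denotes $(q\circ\Phi)_*\partial_b=\frac{\partial(q\circ\Phi)}{\partial x^b}$, the vector $\nabla^{\mathscr G}_{\partial_a}\frac{\partial}{\partial x^b}\in T\mathscr M$ is regarded as an element of $S^2(H^3)^*$ via the differential of $q\circ\Phi$, $\nabla^{\mathscr G}$ is the Levi-Civita connection of $\mathscr G$, and $\nabla^{\mathscr G}_a\Xi_{bkl}$ are the components of $\nabla^{\mathscr G}\Xi$ in affine coordinates.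
   Context: $G_2$-structures: positive $3$-forms $\varphi$ with metric $g_\varphi=\langle\cdot,\cdot\rangle_\varphi$, volume form $\mu_\varphi$, $\Theta(\varphi)=*_\varphi\varphi$; torsion-free: $d\varphi=d\Theta(\varphi)=0$. $\mathscr D$: diffeomorphisms acting trivially on $H^3(M)$; $\mathscr M$: torsion-free $G_2$-structures modulo $\mathscr D$, a manifold of dimension $b^3(M)=n+1$ with $\varphi\mathscr D\mapsto[\varphi]\in H^3:=H^3(M;\mathbb R)$ a local diffeomorphism; affine coordinates $x^a$: $[\varphi]=x^au_a$ for a fixed basis $u_a$ of $H^3$, and $(x^a)$ are also used as linear coordinates on $H^3$. $\mathrm{Vol}(\varphi)=\int\mu_\varphi$, $\mathscr F=-3\log\mathrm{Vol}$, $\mathscr G=\mathscr F_{ab}dx^adx^b$ (equal to $\frac{1}{\mathrm{Vol}(\varphi)}\int\langle\eta,\eta'\rangle_\varphi\mu_\varphi$ on harmonic representatives). Yukawa coupling: $\Xi_{abc}=\frac12\mathscr F_{abc}$. $S^2_+(H^3)^*$: inner products $q=q_{kl}dx^kdx^l$ on $H^3$, with symmetric metric $g_{S^2_+}(\dot q,\dot q)=\frac14q^{kl}q^{rs}\dot q_{kr}\dot q_{sl}$. The map $q\circ\Phi$ sends $\varphi\mathscr D$ to the inner product on $H^3$ given by the $L^2(g_\varphi)$ inner product of harmonic representatives; in affine coordinates $q\circ\Phi(x)=e^{-\mathscr F/3}\mathscr G_{kl}dx^kdx^l$. (It is the composition of the map $\Phi$ to the period domain with the projection $q$ to $S^2_+(H^3)^*$.)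 *)

theory Defs
  imports "HOL-Analysis.Analysis"
begin

(* Affine coordinates x^a on H^3 = R^(n+1) are modelled by vectors x :: real^'n,
   the index type 'n (finite) having b^3(M) = n+1 elements.
   Elements of S^2(H^3)^* (symmetric bilinear forms q_kl dx^k dx^l) are modelled as
   matrices q :: real^'n^'n with q$k$l = q_kl. *)

definition dirderiv :: "('v::real_normed_vector \<Rightarrow> 'w::real_normed_vector) \<Rightarrow> 'v \<Rightarrow> 'v \<Rightarrow> 'w" where
  "dirderiv f p z = vector_derivative (\<lambda>t. f (p + t *\<^sub>R z)) (at 0)"

definition pd :: "'n::finite \<Rightarrow> (real^'n \<Rightarrow> 'w::real_normed_vector) \<Rightarrow> real^'n \<Rightarrow> 'w" where
  "pd a f x = dirderiv f x (axis a 1)"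

fun Ck_on :: "nat \<Rightarrow> (real^'n::finite) set \<Rightarrow> (real^'n \<Rightarrow> real) \<Rightarrow> bool" where
  "Ck_on 0 U f = continuous_on U f"
| "Ck_on (Suc k) U f = (continuous_on U f \<and> (\<forall>x\<in>U. f differentiable (at x))
      \<and> (\<forall>i. Ck_on k U (pd i f)))"

definition smooth_on :: "(real^'n::finite) set \<Rightarrow> (real^'n \<Rightarrow> real) \<Rightarrow> bool" where
  "smooth_on U f = (\<forall>k. Ck_on k U f)"

(* Christoffel map of a Riemannian metric g (g p u v = metric at p) on an open subset of
   an affine space modelled on the linear subspace V:  \<Gamma>_p(X,Y) \<in> V is determined by the
   Koszul formula  g_p(\<Gamma>_p(X,Y),Z) = 1/2 (D_X g(Y,Z) + D_Y g(X,Z) - D_Z g(X,Y)).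
   The Levi-Civita connection is then \<nabla>_X Y = DY(X) + \<Gamma>(X,Y). *)
definition christoffel :: "'v::real_normed_vector set \<Rightarrow> ('v \<Rightarrow> 'v \<Rightarrow> 'v \<Rightarrow> real)
      \<Rightarrow> 'v \<Rightarrow> 'v \<Rightarrow> 'v \<Rightarrow> 'v" where
  "christoffel V g p X Y = (THE w. w \<in> V \<and> (\<forall>Z\<in>V. g p w Z =
      (dirderiv (\<lambda>q. g q Y Z) p X + dirderiv (\<lambda>q. g q X Z) p Y - dirderiv (\<lambda>q. g q X Y) p Z) / 2))"

(* Pull-back by Q of the Levi-Civita connection of (V,g), applied in direction \<partial>_a
   to a section s of the pulled-back (trivial) bundle:
   (Q^* \<nabla>)_{\<partial>_a} s = \<partial>_a s + \<Gamma>_{Q(x)}(\<partial>_a Q, s). *)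
definition pullback_LC :: "'v::real_normed_vector set \<Rightarrow> ('v \<Rightarrow> 'v \<Rightarrow> 'v \<Rightarrow> real)
      \<Rightarrow> (real^'n::finite \<Rightarrow> 'v) \<Rightarrow> (real^'n \<Rightarrow> 'v) \<Rightarrow> 'n \<Rightarrow> real^'n \<Rightarrow> 'v" where
  "pullback_LC V g Q s a x = pd a s x + christoffel V g (Q x) (pd a Q x) (s x)"

definition Sym2 :: "(real^'n^'n::finite) set" where
  "Sym2 = {A. transpose A = A}"

definition gS2 :: "real^'n^'n::finite \<Rightarrow> real^'n^'n \<Rightarrow> real^'n^'n \<Rightarrow> real" where
  "gS2 q A B = (1/4) * (\<Sum>k\<in>UNIV. \<Sum>l\<in>UNIV. \<Sum>r\<in>UNIV. \<Sum>s\<in>UNIV.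
       matrix_inv q $ k $ l * matrix_inv q $ r $ s * A $ k $ r * B $ s $ l)"

definition potF :: "(real^'n::finite \<Rightarrow> real) \<Rightarrow> real^'n \<Rightarrow> real" where
  "potF Vol x = - 3 * ln (Vol x)"

definition Gmet :: "(real^'n::finite \<Rightarrow> real) \<Rightarrow> real^'n \<Rightarrow> real^'n \<Rightarrow> real^'n \<Rightarrow> real" where
  "Gmet F x u v = (\<Sum>k\<in>UNIV. \<Sum>l\<in>UNIV. pd k (pd l F) x * u $ k * v $ l)"

definition Yukawa :: "(real^'n::finite \<Rightarrow> real) \<Rightarrow> real^'n \<Rightarrow> 'n \<Rightarrow> 'n \<Rightarrow> 'n \<Rightarrow> real" where
  "Yukawa F x a b c = (1/2) * pd a (pd b (pd c F)) x"

definition nablaG :: "(real^'n::finite \<Rightarrow> real) \<Rightarrow> real^'n \<Rightarrow> 'n \<Rightarrow> 'n \<Rightarrow> real^'n" where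
  "nablaG F x a b = christoffel UNIV (Gmet F) x (axis a 1) (axis b 1)"

definition Yuk3 :: "(real^'n::finite \<Rightarrow> real) \<Rightarrow> real^'n \<Rightarrow> real^'n \<Rightarrow> real^'n \<Rightarrow> real^'n \<Rightarrow> real" where
  "Yuk3 F x u v w = (\<Sum>i\<in>UNIV. \<Sum>j\<in>UNIV. \<Sum>k\<in>UNIV. Yukawa F x i j k * u $ i * v $ j * w $ k)"

definition nablaG_Yukawa :: "(real^'n::finite \<Rightarrow> real) \<Rightarrow> real^'n \<Rightarrow> 'n \<Rightarrow> 'n \<Rightarrow> 'n \<Rightarrow> 'n \<Rightarrow> real" where
  "nablaG_Yukawa F x a b k l = pd a (\<lambda>y. Yukawa F y b k l) x
     - Yuk3 F x (nablaG F x a b) (axis k 1) (axis l 1)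
     - Yuk3 F x (axis b 1) (nablaG F x a k) (axis l 1)
     - Yuk3 F x (axis b 1) (axis k 1) (nablaG F x a l)"

definition qPhi :: "(real^'n::finite \<Rightarrow> real) \<Rightarrow> real^'n \<Rightarrow> real^'n^'n" where
  "qPhi F x = (\<chi> k l. exp (- F x / 3) * pd k (pd l F) x)"

end

theory Submission
  imports Defs
begin

lemma dirderiv_hd:
  fixes f :: "'v::real_normed_vector \<Rightarrow> 'w::real_normed_vector"
  assumes "(f has_derivative f') (at y)"
  shows "((\<lambda>t. f (y + t *\<^sub>R v)) has_vector_derivative f' v) (at 0)"
    and "dirderiv f y v = f' v"
proof -
  have h1: "((\<lambda>t. y + t *\<^sub>R v) has_derivative (\<lambda>t. t *\<^sub>R v)) (at 0)"
    by (auto intro!: derivative_eq_intros)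
  have "(f has_derivative f') (at (y + 0 *\<^sub>R v))" using assms by simp
  from diff_chain_at[OF h1 this] have "((\<lambda>t. f (y + t *\<^sub>R v)) has_derivative (\<lambda>t. f' (t *\<^sub>R v))) (at 0)"
    by (simp add: o_def)
  moreover have "(\<lambda>t. f' (t *\<^sub>R v)) = (\<lambda>t. t *\<^sub>R f' v)"
    using has_derivative_linear[OF assms] by (simp add: linear_scale)
  ultimately show hv: "((\<lambda>t. f (y + t *\<^sub>R v)) has_vector_derivative f' v) (at 0)"
    by (simp add: has_vector_derivative_def)
  show "dirderiv f y v = f' v"
    unfolding dirderiv_def using vector_derivative_at[OF hv] .
qed

lemma pd_hd:
  assumes "(f has_derivative f') (at y)"
  shows "pd i f y = f' (axis i 1)"
  unfolding pd_def using dirderiv_hd[OF assms] by simp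

lemma dirderiv_sum:
  fixes f :: "real^'n::finite \<Rightarrow> 'w::real_normed_vector"
  assumes "f differentiable (at y)"
  shows "dirderiv f y v = (\<Sum>i\<in>UNIV. v$i *\<^sub>R pd i f y)"
proof -
  obtain f' where hd: "(f has_derivative f') (at y)" using assms differentiable_def by blast
  have lin: "linear f'" using has_derivative_linear[OF hd] .
  have "v = (\<Sum>i\<in>UNIV. v$i *\<^sub>R axis i 1)"
    by (simp add: vec_eq_iff axis_def sum.delta' if_distrib cong: if_cong)
  then have "f' v = f' (\<Sum>i\<in>UNIV. v$i *\<^sub>R axis i 1)" by simp
  also have "\<dots> = (\<Sum>i\<in>UNIV. v$i *\<^sub>R f' (axis i 1))"
    using lin by (simp add: linear_sum linear_scale)
  finally show ?thesis using dirderiv_hd(2)[OF hd] pd_hd[OF hd] by simp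
qed

lemma pd_local:
  assumes "open U" "y \<in> U" "\<And>z. z \<in> U \<Longrightarrow> f z = g z"
  shows "pd i f y = pd i g y"
proof -
  have ev: "eventually (\<lambda>t. t \<in> UNIV \<longrightarrow> f (y + t *\<^sub>R axis i 1) = g (y + t *\<^sub>R axis i 1)) (nhds 0)"
  proof -
    obtain e where e: "e > 0" "ball y e \<subseteq> U" using assms(1,2) open_contains_ball by blast
    have "eventually (\<lambda>t. y + t *\<^sub>R axis i 1 \<in> U) (nhds 0)"
      unfolding eventually_nhds_metric
    proof (intro exI[of _ e] conjI allI impI)
      fix t :: real assume "dist t 0 < e"
      then have "y + t *\<^sub>R axis i 1 \<in> ball y e" by (simp add: dist_norm)
      then show "y + t *\<^sub>R axis i 1 \<in> U" using e by blast
    qed (use e in auto)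
    then show ?thesis by eventually_elim (use assms(3) in auto)
  qed
  show ?thesis unfolding pd_def dirderiv_def
    by (rule vector_derivative_cong_eq[OF ev]) auto
qed


lemma Ck_mono: "Ck_on (Suc k) U f \<Longrightarrow> Ck_on k U f"
proof (induction k arbitrary: f)
  case 0 then show ?case by simp
next
  case (Suc k)
  then show ?case by (simp only: Ck_on.simps) blast
qed

lemma Ck_cont: "Ck_on k U f \<Longrightarrow> continuous_on U f"
  by (cases k) auto

lemma Ck_diff: "Ck_on (Suc k) U f \<Longrightarrow> x \<in> U \<Longrightarrow> f differentiable (at x)"
  by auto

lemma Ck_pd: "Ck_on (Suc k) U f \<Longrightarrow> Ck_on k U (pd i f)"
  by auto

lemma Ck_cong:
  assumes "open U" "\<And>z. z \<in> U \<Longrightarrow> f z = g z" "Ck_on k U f"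
  shows "Ck_on k U g"
  using assms(2,3)
proof (induction k arbitrary: f g)
  case 0 then show ?case using continuous_on_cong[of U U f g] by simp
next
  case (Suc k)
  have c: "continuous_on U g" using Suc.prems continuous_on_cong[of U U f g] by simp
  have d: "g differentiable (at x)" if "x \<in> U" for x
  proof -
    have "f differentiable (at x)" using Suc.prems(2) that by simp
    then obtain f' where "(f has_derivative f') (at x)" unfolding differentiable_def by blast
    then have "(g has_derivative f') (at x)"
      by (rule has_derivative_transform_within_open[OF _ assms(1) that]) (use Suc.prems(1) in blast)
    then show ?thesis using differentiable_def by blast
  qed
  have p: "Ck_on k U (pd i g)" for i
  proof (rule Suc.IH[of "pd i f"])
    show "pd i f z = pd i g z" if "z \<in> U" for z using pd_local[OF assms(1) that Suc.prems(1)] .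
    show "Ck_on k U (pd i f)" using Suc.prems(2) by simp
  qed
  show ?case using c d p by simp
qed

lemma Ck_formula:
  assumes "open U" "\<And>i z. z \<in> U \<Longrightarrow> pd i f z = h i z" "\<And>i. Ck_on k U (h i)"
  shows "Ck_on k U (pd i f)"
  by (rule Ck_cong[OF assms(1) _ assms(3)]) (use assms(2) in auto)

lemma pd_add:
  assumes "f differentiable (at y)" "g differentiable (at y)"
  shows "pd i (\<lambda>z. f z + g z) y = pd i f y + pd i g y"
proof -
  obtain f' g' where "(f has_derivative f') (at y)" "(g has_derivative g') (at y)"
    using assms differentiable_def by blast
  note a = this
  have "((\<lambda>z. f z + g z) has_derivative (\<lambda>h. f' h + g' h)) (at y)"
    using has_derivative_add[OF a] .
  from pd_hd[OF this] pd_hd[OF a(1)] pd_hd[OF a(2)] show ?thesis by simp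
qed

lemma pd_mult:
  fixes f g :: "real^'n::finite \<Rightarrow> real"
  assumes "f differentiable (at y)" "g differentiable (at y)"
  shows "pd i (\<lambda>z. f z * g z) y = pd i f y * g y + f y * pd i g y"
proof -
  obtain f' g' where a: "(f has_derivative f') (at y)" "(g has_derivative g') (at y)"
    using assms differentiable_def by blast
  have "((\<lambda>z. f z * g z) has_derivative (\<lambda>h. f y * g' h + f' h * g y)) (at y)"
    using has_derivative_mult[OF a] .
  from pd_hd[OF this] pd_hd[OF a(1)] pd_hd[OF a(2)] show ?thesis by simp
qed

lemma pd_const: "pd i (\<lambda>z. c) y = 0"
proof -
  have "((\<lambda>z. c) has_derivative (\<lambda>h. 0)) (at y)" by simp
  from pd_hd[OF this] show ?thesis by simp
qed

lemma pd_comp: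
  fixes f :: "real^'n::finite \<Rightarrow> real"
  assumes "f differentiable (at y)" "(h has_real_derivative h') (at (f y))"
  shows "pd i (\<lambda>z. h (f z)) y = h' * pd i f y"
proof -
  obtain f' where a: "(f has_derivative f') (at y)" using assms differentiable_def by blast
  have e: "(\<lambda>t. t * h') = (*) h'" by (auto simp: mult.commute)
  have b: "(h has_derivative (\<lambda>t. t * h')) (at (f y))" using assms(2) unfolding e
    by (simp add: has_field_derivative_def)
  have "((\<lambda>z. h (f z)) has_derivative (\<lambda>v. f' v * h')) (at y)"
    using diff_chain_at[OF a b] by (simp add: o_def)
  from pd_hd[OF this] pd_hd[OF a] show ?thesis by simp
qed

lemma diff_comp_real:
  fixes f :: "real^'n::finite \<Rightarrow> real"
  assumes "f differentiable (at y)" "(h has_real_derivative h') (at (f y))"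
  shows "(\<lambda>z. h (f z)) differentiable (at y)"
proof -
  obtain f' where a: "(f has_derivative f') (at y)" using assms differentiable_def by blast
  have e: "(\<lambda>t. t * h') = (*) h'" by (auto simp: mult.commute)
  have b: "(h has_derivative (\<lambda>t. t * h')) (at (f y))" using assms(2) unfolding e
    by (simp add: has_field_derivative_def)
  show ?thesis using diff_chain_at[OF a b] unfolding differentiable_def o_def by blast
qed

lemma Ck_const: "Ck_on k U (\<lambda>z. c)"
proof (induction k arbitrary: c)
  case 0 then show ?case by simp
next
  case (Suc k)
  have "Ck_on k U (pd i (\<lambda>z. c))" for i
  proof -
    have e: "pd i (\<lambda>z. c) = (\<lambda>z. 0)" by (rule ext) (simp add: pd_const)
    show ?thesis unfolding e by (rule Suc)
  qed
  then show ?case by simp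
qed

lemma Ck_add:
  assumes "open U" shows "Ck_on k U f \<Longrightarrow> Ck_on k U g \<Longrightarrow> Ck_on k U (\<lambda>z. f z + g z)"
proof (induction k arbitrary: f g)
  case 0 then show ?case by (auto intro!: continuous_intros)
next
  case (Suc k)
  have "Ck_on k U (pd i (\<lambda>z. f z + g z))" for i
  proof (rule Ck_formula[OF assms, where h="\<lambda>i z. pd i f z + pd i g z"])
    show "pd i (\<lambda>z. f z + g z) z = pd i f z + pd i g z" if "z \<in> U" for i z
      using Suc.prems that by (intro pd_add) simp_all
    show "Ck_on k U (\<lambda>z. pd i f z + pd i g z)" for i
      using Suc.IH Suc.prems by simp
  qed
  moreover have "(\<lambda>z. f z + g z) differentiable (at z)" if "z \<in> U" for z
    using Suc.prems that by (intro differentiable_add) simp_all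
  moreover have "continuous_on U (\<lambda>z. f z + g z)"
    using Suc.prems by (intro continuous_on_add) simp_all
  ultimately show ?case by simp
qed

lemma Ck_mult:
  assumes "open U" shows "Ck_on k U f \<Longrightarrow> Ck_on k U g \<Longrightarrow> Ck_on k U (\<lambda>z. f z * g z)"
proof (induction k arbitrary: f g)
  case 0 then show ?case by (auto intro!: continuous_intros)
next
  case (Suc k)
  have "Ck_on k U (pd i (\<lambda>z. f z * g z))" for i
  proof (rule Ck_formula[OF assms, where h="\<lambda>i z. pd i f z * g z + f z * pd i g z"])
    show "pd i (\<lambda>z. f z * g z) z = pd i f z * g z + f z * pd i g z" if "z \<in> U" for i z
      using Suc.prems that by (intro pd_mult) simp_all
    show "Ck_on k U (\<lambda>z. pd i f z * g z + f z * pd i g z)" for i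
    proof -
      have "Ck_on k U (\<lambda>z. pd i f z * g z)" using Suc.IH[OF Ck_pd[OF Suc.prems(1)] Ck_mono[OF Suc.prems(2)]] .
      moreover have "Ck_on k U (\<lambda>z. f z * pd i g z)" using Suc.IH[OF Ck_mono[OF Suc.prems(1)] Ck_pd[OF Suc.prems(2)]] .
      ultimately show ?thesis using Ck_add[OF assms] by blast
    qed
  qed
  moreover have "(\<lambda>z. f z * g z) differentiable (at z)" if "z \<in> U" for z
    using Suc.prems that by (intro differentiable_mult) simp_all
  moreover have "continuous_on U (\<lambda>z. f z * g z)"
    using Suc.prems by (intro continuous_on_mult) simp_all
  ultimately show ?case by simp
qed

lemma Ck_inverse:
  assumes "open U" "\<And>z. z \<in> U \<Longrightarrow> f z \<noteq> 0"
  shows "Ck_on k U f \<Longrightarrow> Ck_on k U (\<lambda>z. inverse (f z))"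
proof (induction k)
  case 0 then show ?case using assms by (auto intro!: continuous_intros)
next
  case (Suc k)
  have "Ck_on k U (pd i (\<lambda>z. inverse (f z)))" for i
  proof (rule Ck_formula[OF assms(1), where h="\<lambda>i z. - (inverse (f z) * inverse (f z)) * pd i f z"])
    show "pd i (\<lambda>z. inverse (f z)) z = - (inverse (f z) * inverse (f z)) * pd i f z" if "z \<in> U" for i z
    proof -
      have "(inverse has_real_derivative - (inverse (f z) * inverse (f z))) (at (f z))"
        using DERIV_inverse[of "f z" UNIV] assms(2)[OF that] by (simp add: power2_eq_square)
      moreover have "f differentiable (at z)" using Suc.prems that by simp
      ultimately show ?thesis by (rule pd_comp[rotated])
    qed
    show "Ck_on k U (\<lambda>z. - (inverse (f z) * inverse (f z)) * pd i f z)" for i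
    proof -
      have "Ck_on k U (\<lambda>z. inverse (f z))" using Suc.IH Ck_mono[OF Suc.prems] by blast
      then have "Ck_on k U (\<lambda>z. (inverse (f z) * inverse (f z)))"
        using Ck_mult[OF assms(1)] by blast
      then have "Ck_on k U (\<lambda>z. (-1) * (inverse (f z) * inverse (f z)))"
        using Ck_mult[OF assms(1) Ck_const] by blast
      then have "Ck_on k U (\<lambda>z. ((-1) * (inverse (f z) * inverse (f z))) * pd i f z)"
        using Ck_mult[OF assms(1)] Ck_pd[OF Suc.prems] by blast
      then show ?thesis by simp
    qed
  qed
  moreover have "(\<lambda>z. inverse (f z)) differentiable (at z)" if "z \<in> U" for z
    using Suc.prems that assms(2)[OF that] by (auto intro!: differentiable_inverse)
  moreover have "continuous_on U (\<lambda>z. inverse (f z))"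
    using Suc.prems assms by (auto intro!: continuous_on_inverse)
  ultimately show ?case by simp
qed


lemma Ck_ln:
  assumes "open U" "\<And>z. z \<in> U \<Longrightarrow> f z > 0"
  shows "Ck_on k U f \<Longrightarrow> Ck_on k U (\<lambda>z. ln (f z))"
proof (cases k)
  case 0 then show "Ck_on k U f \<Longrightarrow> Ck_on k U (\<lambda>z. ln (f z))"
    using assms by (auto intro!: continuous_on_ln) (metis less_irrefl)
next
  case (Suc m)
  assume ck: "Ck_on k U f"
  have "Ck_on m U (pd i (\<lambda>z. ln (f z)))" for i
  proof (rule Ck_formula[OF assms(1), where h="\<lambda>i z. inverse (f z) * pd i f z"])
    show "pd i (\<lambda>z. ln (f z)) z = inverse (f z) * pd i f z" if "z \<in> U" for i z
    proof -
      have "(ln has_real_derivative inverse (f z)) (at (f z))"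
        using DERIV_ln[of "f z"] assms(2)[OF that] by simp
      moreover have "f differentiable (at z)" using ck Suc that by simp
      ultimately show ?thesis by (rule pd_comp[rotated])
    qed
    show "Ck_on m U (\<lambda>z. inverse (f z) * pd i f z)" for i
    proof -
      have "Ck_on m U (\<lambda>z. inverse (f z))"
        using Ck_inverse[OF assms(1)] assms(2) Ck_mono ck Suc by (metis less_irrefl)
      then show ?thesis using Ck_mult[OF assms(1)] Ck_pd ck Suc by blast
    qed
  qed
  moreover have "(\<lambda>z. ln (f z)) differentiable (at z)" if "z \<in> U" for z
  proof -
    have "f differentiable (at z)" using ck Suc that by simp
    then show ?thesis using diff_comp_real DERIV_ln assms(2)[OF that] by blast
  qed
  moreover have "continuous_on U (\<lambda>z. ln (f z))"
    using ck assms Ck_cont by (auto intro!: continuous_on_ln) (metis less_irrefl)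
  ultimately show "Ck_on k U (\<lambda>z. ln (f z))" using Suc by simp
qed

lemma Ck_exp:
  assumes "open U"
  shows "Ck_on k U f \<Longrightarrow> Ck_on k U (\<lambda>z. exp (f z))"
proof (induction k arbitrary: f)
  case 0 then show ?case by (auto intro!: continuous_intros)
next
  case (Suc k)
  have "Ck_on k U (pd i (\<lambda>z. exp (f z)))" for i
  proof (rule Ck_formula[OF assms(1), where h="\<lambda>i z. exp (f z) * pd i f z"])
    show "pd i (\<lambda>z. exp (f z)) z = exp (f z) * pd i f z" if "z \<in> U" for i z
    proof -
      have "(exp has_real_derivative exp (f z)) (at (f z))" by simp
      moreover have "f differentiable (at z)" using Suc.prems that by simp
      ultimately show ?thesis by (rule pd_comp[rotated])
    qed
    show "Ck_on k U (\<lambda>z. exp (f z) * pd i f z)" for i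
      using Ck_mult[OF assms(1) Suc.IH[OF Ck_mono[OF Suc.prems]] Ck_pd[OF Suc.prems]] .
  qed
  moreover have "(\<lambda>z. exp (f z)) differentiable (at z)" if "z \<in> U" for z
  proof -
    have "f differentiable (at z)" using Suc.prems that by simp
    then show ?thesis using diff_comp_real DERIV_exp by blast
  qed
  moreover have "continuous_on U (\<lambda>z. exp (f z))"
    using Suc.prems Ck_cont by (auto intro!: continuous_intros)
  ultimately show ?case by simp
qed

lemma smooth_pd: "smooth_on U f \<Longrightarrow> smooth_on U (pd i f)"
  unfolding smooth_on_def using Ck_pd by blast

lemma smooth_diff: "smooth_on U f \<Longrightarrow> x \<in> U \<Longrightarrow> f differentiable (at x)"
  unfolding smooth_on_def using Ck_diff by blast

lemma smooth_cont: "smooth_on U f \<Longrightarrow> continuous_on U f"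
  unfolding smooth_on_def using Ck_cont by blast

lemma smooth_const: "smooth_on U (\<lambda>z. c)"
  unfolding smooth_on_def using Ck_const by blast

lemma smooth_add: "open U \<Longrightarrow> smooth_on U f \<Longrightarrow> smooth_on U g \<Longrightarrow> smooth_on U (\<lambda>z. f z + g z)"
  unfolding smooth_on_def using Ck_add by blast

lemma smooth_mult: "open U \<Longrightarrow> smooth_on U f \<Longrightarrow> smooth_on U g \<Longrightarrow> smooth_on U (\<lambda>z. f z * g z)"
  unfolding smooth_on_def using Ck_mult by blast

lemma smooth_exp: "open U \<Longrightarrow> smooth_on U f \<Longrightarrow> smooth_on U (\<lambda>z. exp (f z))"
  unfolding smooth_on_def using Ck_exp by blast

lemma smooth_ln: "open U \<Longrightarrow> (\<And>z. z \<in> U \<Longrightarrow> f z > 0) \<Longrightarrow> smooth_on U f \<Longrightarrow> smooth_on U (\<lambda>z. ln (f z))"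
  unfolding smooth_on_def using Ck_ln by blast

lemma smooth_Ck: "smooth_on U f \<Longrightarrow> Ck_on k U f"
  unfolding smooth_on_def by blast


lemma line_deriv:
  fixes f :: "'v::real_normed_vector \<Rightarrow> real"
  assumes "f differentiable (at (y0 + s *\<^sub>R v))"
  shows "((\<lambda>s. f (y0 + s *\<^sub>R v)) has_real_derivative dirderiv f (y0 + s *\<^sub>R v) v) (at s)"
proof -
  obtain f' where a: "(f has_derivative f') (at (y0 + s *\<^sub>R v))" using assms differentiable_def by blast
  have h1: "((\<lambda>s. y0 + s *\<^sub>R v) has_derivative (\<lambda>t. t *\<^sub>R v)) (at s)"
    by (auto intro!: derivative_eq_intros)
  from diff_chain_at[OF h1 a] have "((\<lambda>s. f (y0 + s *\<^sub>R v)) has_derivative (\<lambda>t. f' (t *\<^sub>R v))) (at s)"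
    by (simp add: o_def)
  moreover have "(\<lambda>t. f' (t *\<^sub>R v)) = (*) (f' v)"
    using has_derivative_linear[OF a] by (auto simp: linear_scale)
  ultimately show ?thesis using dirderiv_hd(2)[OF a] by (simp add: has_field_derivative_def)
qed

lemma line_pd1:
  fixes f :: "real^'n::finite \<Rightarrow> real"
  assumes "f differentiable (at (x + s *\<^sub>R axis i 1 + t *\<^sub>R axis j 1))"
  shows "((\<lambda>s. f (x + s *\<^sub>R axis i 1 + t *\<^sub>R axis j 1)) has_real_derivative
            pd i f (x + s *\<^sub>R axis i 1 + t *\<^sub>R axis j 1)) (at s)"
proof -
  have e: "\<And>s. x + s *\<^sub>R axis i 1 + t *\<^sub>R axis j 1 = (x + t *\<^sub>R axis j 1) + s *\<^sub>R axis i 1"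
    by (simp add: algebra_simps)
  show ?thesis using line_deriv[of f "x + t *\<^sub>R axis j 1" s "axis i 1"] assms
    unfolding e pd_def by simp
qed

lemma line_pd2:
  fixes f :: "real^'n::finite \<Rightarrow> real"
  assumes "f differentiable (at (x + s *\<^sub>R axis i 1 + t *\<^sub>R axis j 1))"
  shows "((\<lambda>t. f (x + s *\<^sub>R axis i 1 + t *\<^sub>R axis j 1)) has_real_derivative
            pd j f (x + s *\<^sub>R axis i 1 + t *\<^sub>R axis j 1)) (at t)"
proof -
  show ?thesis using line_deriv[of f "x + s *\<^sub>R axis i 1" t "axis j 1"] assms
    unfolding pd_def by simp
qed

lemma schwarz:
  fixes f :: "real^'n::finite \<Rightarrow> real"
  assumes U: "open U" and x: "x \<in> U" and ck: "Ck_on (Suc (Suc 0)) U f"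
  shows "pd i (pd j f) x = pd j (pd i f) x"
proof (cases "i = j")
  case True then show ?thesis by simp
next
  case False
  define A where "A = pd i (pd j f)"
  define B where "B = pd j (pd i f)"
  define P where "P = (\<lambda>s t. x + s *\<^sub>R axis i (1::real) + t *\<^sub>R axis j (1::real))"
  have df: "f differentiable (at y)" if "y \<in> U" for y using ck that by simp
  have dfi: "pd i f differentiable (at y)" if "y \<in> U" for y using ck that by simp
  have dfj: "pd j f differentiable (at y)" if "y \<in> U" for y using ck that by simp
  have cA: "continuous_on U A" unfolding A_def using ck by simp
  have cB: "continuous_on U B" unfolding B_def using ck by simp
  show ?thesis
  proof (rule ccontr)
    assume ne: "pd i (pd j f) x \<noteq> pd j (pd i f) x"
    define e where "e = \<bar>A x - B x\<bar>"
    have e0: "e > 0" using ne unfolding e_def A_def B_def by simp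
    obtain dA where dA: "dA > 0" "\<And>y. y \<in> U \<Longrightarrow> dist y x < dA \<Longrightarrow> dist (A y) (A x) < e/2"
      using cA x e0 unfolding continuous_on_iff by (meson half_gt_zero)
    obtain dB where dB: "dB > 0" "\<And>y. y \<in> U \<Longrightarrow> dist y x < dB \<Longrightarrow> dist (B y) (B x) < e/2"
      using cB x e0 unfolding continuous_on_iff by (meson half_gt_zero)
    obtain r where r: "r > 0" "ball x r \<subseteq> U" using U x open_contains_ball by blast
    define d where "d = min r (min dA dB)"
    have d0: "d > 0" using r dA dB unfolding d_def by simp
    define h where "h = d / 4"
    have h0: "h > 0" using d0 unfolding h_def by simp
    have near: "P s t \<in> U \<and> dist (P s t) x < d" if "0 \<le> s" "s \<le> h" "0 \<le> t" "t \<le> h" for s t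
    proof -
      have "norm (s *\<^sub>R axis i (1::real) + t *\<^sub>R axis j (1::real)) \<le> norm (s *\<^sub>R axis i (1::real)) + norm (t *\<^sub>R axis j (1::real))"
        by (rule norm_triangle_ineq)
      also have "\<dots> = s + t" using that by simp
      also have "\<dots> < d" using that h0 unfolding h_def by simp
      finally have lt: "dist (P s t) x < d" unfolding P_def dist_norm by (simp add: add.assoc)
      then have "P s t \<in> ball x r" unfolding d_def by (simp add: dist_commute)
      then show ?thesis using r lt by blast
    qed
    define D where "D = f (P h h) - f (P h 0) - f (P 0 h) + f (P 0 0)"
    obtain s1 where s1: "0 < s1" "s1 < h"
      "(\<lambda>s. f (P s h) - f (P s 0)) h - (\<lambda>s. f (P s h) - f (P s 0)) 0
         = (h - 0) * (pd i f (P s1 h) - pd i f (P s1 0))"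
    proof -
      have "\<exists>z. 0 < z \<and> z < h \<and> (\<lambda>s. f (P s h) - f (P s 0)) h - (\<lambda>s. f (P s h) - f (P s 0)) 0
         = (h - 0) * (\<lambda>s. pd i f (P s h) - pd i f (P s 0)) z"
      proof (rule MVT2[OF h0])
        fix s assume "0 \<le> s" "s \<le> h"
        then have "P s h \<in> U" "P s 0 \<in> U" using near h0 by auto
        then show "((\<lambda>s. f (P s h) - f (P s 0)) has_real_derivative pd i f (P s h) - pd i f (P s 0)) (at s)"
          unfolding P_def by (intro derivative_intros line_pd1) (auto intro: df[unfolded P_def])
      qed
      then show ?thesis using that by auto
    qed
    obtain t1 where t1: "0 < t1" "t1 < h"
      "pd i f (P s1 h) - pd i f (P s1 0) = (h - 0) * B (P s1 t1)"
    proof -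
      have "\<exists>z. 0 < z \<and> z < h \<and> (\<lambda>t. pd i f (P s1 t)) h - (\<lambda>t. pd i f (P s1 t)) 0
         = (h - 0) * (\<lambda>t. B (P s1 t)) z"
      proof (rule MVT2[OF h0])
        fix t assume "0 \<le> t" "t \<le> h"
        then have "P s1 t \<in> U" using near s1 by auto
        then show "((\<lambda>t. pd i f (P s1 t)) has_real_derivative B (P s1 t)) (at t)"
          unfolding P_def B_def by (intro line_pd2) (auto intro: dfi[unfolded P_def])
      qed
      then show ?thesis using that by auto
    qed
    obtain t2 where t2: "0 < t2" "t2 < h"
      "(\<lambda>t. f (P h t) - f (P 0 t)) h - (\<lambda>t. f (P h t) - f (P 0 t)) 0
         = (h - 0) * (pd j f (P h t2) - pd j f (P 0 t2))"
    proof -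
      have "\<exists>z. 0 < z \<and> z < h \<and> (\<lambda>t. f (P h t) - f (P 0 t)) h - (\<lambda>t. f (P h t) - f (P 0 t)) 0
         = (h - 0) * (\<lambda>t. pd j f (P h t) - pd j f (P 0 t)) z"
      proof (rule MVT2[OF h0])
        fix t assume "0 \<le> t" "t \<le> h"
        then have "P h t \<in> U" "P 0 t \<in> U" using near h0 by auto
        then show "((\<lambda>t. f (P h t) - f (P 0 t)) has_real_derivative pd j f (P h t) - pd j f (P 0 t)) (at t)"
          unfolding P_def by (intro derivative_intros line_pd2) (auto intro: df[unfolded P_def])
      qed
      then show ?thesis using that by auto
    qed
    obtain s2 where s2: "0 < s2" "s2 < h"
      "pd j f (P h t2) - pd j f (P 0 t2) = (h - 0) * A (P s2 t2)"
    proof -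
      have "\<exists>z. 0 < z \<and> z < h \<and> (\<lambda>s. pd j f (P s t2)) h - (\<lambda>s. pd j f (P s t2)) 0
         = (h - 0) * (\<lambda>s. A (P s t2)) z"
      proof (rule MVT2[OF h0])
        fix s assume "0 \<le> s" "s \<le> h"
        then have "P s t2 \<in> U" using near t2 by auto
        then show "((\<lambda>s. pd j f (P s t2)) has_real_derivative A (P s t2)) (at s)"
          unfolding P_def A_def by (intro line_pd1) (auto intro: dfj[unfolded P_def])
      qed
      then show ?thesis using that by auto
    qed
    have "D = h * (h * B (P s1 t1))" using s1(3) t1(3) unfolding D_def by simp
    moreover have "D = h * (h * A (P s2 t2))" using s2(3) t2(3) unfolding D_def by simp
    ultimately have AB: "A (P s2 t2) = B (P s1 t1)" using h0 by simp
    have p1: "P s1 t1 \<in> U \<and> dist (P s1 t1) x < d" using near s1 t1 by simp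
    have p2: "P s2 t2 \<in> U \<and> dist (P s2 t2) x < d" using near s2 t2 by simp
    have "dist (A (P s2 t2)) (A x) < e/2" using dA(2) p2 unfolding d_def by simp
    moreover have "dist (B (P s1 t1)) (B x) < e/2" using dB(2) p1 unfolding d_def by simp
    ultimately have "\<bar>A x - B x\<bar> < e" using AB unfolding dist_real_def by linarith
    then show False unfolding e_def by simp
  qed
qed



lemma minv_works:
  fixes A :: "real^'n::finite^'n"
  assumes "invertible A"
  shows "A ** matrix_inv A = mat 1" "matrix_inv A ** A = mat 1"
proof -
  have "\<exists>A'. A ** A' = mat 1 \<and> A' ** A = mat 1" using assms unfolding invertible_def by blast
  then have "A ** matrix_inv A = mat 1 \<and> matrix_inv A ** A = mat 1"
    unfolding matrix_inv_def by (rule someI_ex)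
  then show "A ** matrix_inv A = mat 1" "matrix_inv A ** A = mat 1" by auto
qed

lemma minv_unique:
  fixes A B :: "real^'n::finite^'n"
  assumes "A ** B = mat 1"
  shows "matrix_inv A = B"
proof -
  have inv: "invertible A" using assms invertible_right_inverse by blast
  have "matrix_inv A = matrix_inv A ** (A ** B)" using assms by simp
  also have "\<dots> = B" by (simp add: matrix_mul_assoc minv_works(2)[OF inv])
  finally show ?thesis .
qed

lemma minv_invertible:
  fixes A :: "real^'n::finite^'n"
  assumes "invertible A" shows "invertible (matrix_inv A)"
  using minv_works[OF assms] invertible_def by blast

lemma minv_sym:
  fixes A :: "real^'n::finite^'n"
  assumes "invertible A" "transpose A = A"
  shows "transpose (matrix_inv A) = matrix_inv A"
proof -
  have "transpose (matrix_inv A) ** A = mat 1"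
    using arg_cong[OF minv_works(1)[OF assms(1)], of transpose] assms(2)
    by (simp add: matrix_transpose_mul transpose_mat)
  then have "A ** transpose (matrix_inv A) = mat 1" using matrix_left_right_inverse by blast
  from minv_unique[OF this] show ?thesis by simp
qed

lemma minv_scale:
  fixes A :: "real^'n::finite^'n"
  assumes "invertible A" "c \<noteq> 0"
  shows "matrix_inv (c *\<^sub>R A) = (1/c) *\<^sub>R matrix_inv A"
  by (rule minv_unique) (simp add: assms matrix_scalar_ac minv_works(1)[OF assms(1)] flip: scalar_matrix_assoc)

definition SA :: "real^'n::finite^'m::finite \<Rightarrow> real" where
  "SA A = (\<Sum>i\<in>UNIV. \<Sum>j\<in>UNIV. \<bar>A$i$j\<bar>)"

definition sv :: "real^'n::finite \<Rightarrow> real" where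
  "sv v = (\<Sum>i\<in>UNIV. \<bar>v$i\<bar>)"

lemma SA_nonneg: "SA A \<ge> 0" unfolding SA_def by (intro sum_nonneg) auto

lemma sv_nonneg: "sv v \<ge> 0" unfolding sv_def by (intro sum_nonneg) auto

lemma SA_entry: "\<bar>A$i$j\<bar> \<le> SA A"
proof -
  have "\<bar>A$i$j\<bar> \<le> (\<Sum>j\<in>UNIV. \<bar>A$i$j\<bar>)" by (rule member_le_sum) auto
  also have "\<dots> \<le> SA A" unfolding SA_def by (rule member_le_sum[of i]) (auto intro: sum_nonneg)
  finally show ?thesis .
qed

lemma SA_row: "(\<Sum>j\<in>UNIV. \<bar>A$i$j\<bar>) \<le> SA A"
  unfolding SA_def by (rule member_le_sum[of i]) (auto intro: sum_nonneg)

lemma sv_entry: "\<bar>v$i\<bar> \<le> sv v"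
  unfolding sv_def by (rule member_le_sum) auto

lemma sv_zero:
  assumes "sv v \<le> 0" shows "v = 0"
proof -
  have "v$i = 0" for i using sv_entry[of v i] assms by simp
  then show ?thesis by (simp add: vec_eq_iff)
qed

lemma SA_add: "SA (A + B) \<le> SA A + SA B"
  unfolding SA_def by (simp add: sum.distrib[symmetric] sum_mono abs_triangle_ineq)

lemma SA_diff: "SA (A - B) \<le> SA A + SA B"
  unfolding SA_def by (simp add: sum.distrib[symmetric] sum_mono abs_triangle_ineq4)

lemma SA_scale: "SA (c *\<^sub>R A) = \<bar>c\<bar> * SA A"
  unfolding SA_def by (simp add: abs_mult sum_distrib_left)

lemma SA_minus: "SA (- A) = SA A"
  unfolding SA_def by simp

lemma SA_mult: "SA (A ** B) \<le> SA A * SA B"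
proof -
  have "SA (A ** B) = (\<Sum>i\<in>UNIV. \<Sum>j\<in>UNIV. \<bar>\<Sum>k\<in>UNIV. A$i$k * B$k$j\<bar>)"
    unfolding SA_def matrix_matrix_mult_def by simp
  also have "\<dots> \<le> (\<Sum>i\<in>UNIV. \<Sum>j\<in>UNIV. \<Sum>k\<in>UNIV. \<bar>A$i$k\<bar> * \<bar>B$k$j\<bar>)"
    by (intro sum_mono order_trans[OF sum_abs]) (simp add: abs_mult)
  also have "\<dots> = (\<Sum>i\<in>UNIV. \<Sum>k\<in>UNIV. \<bar>A$i$k\<bar> * (\<Sum>j\<in>UNIV. \<bar>B$k$j\<bar>))"
  proof (intro sum.cong refl)
    fix i
    show "(\<Sum>j\<in>UNIV. \<Sum>k\<in>UNIV. \<bar>A$i$k\<bar> * \<bar>B$k$j\<bar>) = (\<Sum>k\<in>UNIV. \<bar>A$i$k\<bar> * (\<Sum>j\<in>UNIV. \<bar>B$k$j\<bar>))"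
      by (subst sum.swap) (simp add: sum_distrib_left)
  qed
  also have "\<dots> \<le> (\<Sum>i\<in>UNIV. \<Sum>k\<in>UNIV. \<bar>A$i$k\<bar> * SA B)"
    by (intro sum_mono mult_left_mono SA_row) auto
  also have "\<dots> = SA A * SA B" unfolding SA_def by (simp add: sum_distrib_right)
  finally show ?thesis .
qed

lemma sv_mult: "sv (A *v v) \<le> SA A * sv v"
proof -
  have "sv (A *v v) = (\<Sum>i\<in>UNIV. \<bar>\<Sum>k\<in>UNIV. A$i$k * v$k\<bar>)"
    unfolding sv_def matrix_vector_mult_def by simp
  also have "\<dots> \<le> (\<Sum>i\<in>UNIV. \<Sum>k\<in>UNIV. \<bar>A$i$k\<bar> * \<bar>v$k\<bar>)"
    by (intro sum_mono order_trans[OF sum_abs]) (simp add: abs_mult)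
  also have "\<dots> \<le> (\<Sum>i\<in>UNIV. \<Sum>k\<in>UNIV. \<bar>A$i$k\<bar> * sv v)"
    by (intro sum_mono mult_left_mono sv_entry) auto
  also have "\<dots> = SA A * sv v" unfolding SA_def by (simp add: sum_distrib_right)
  finally show ?thesis .
qed


lemma mm_add_r: "((A::real^'n::finite^'m::finite) + B) ** (C::real^'k::finite^'n) = A ** C + B ** C"
  by (simp add: matrix_matrix_mult_def vec_eq_iff sum.distrib distrib_right)
lemma mm_add_l: "(A::real^'n::finite^'m::finite) ** ((B::real^'k::finite^'n) + C) = A ** B + A ** C"
  by (simp add: matrix_matrix_mult_def vec_eq_iff sum.distrib distrib_left)
lemma mm_diff_r: "((A::real^'n::finite^'m::finite) - B) ** (C::real^'k::finite^'n) = A ** C - B ** C"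
  by (simp add: matrix_matrix_mult_def vec_eq_iff sum_subtractf left_diff_distrib)
lemma mm_diff_l: "(A::real^'n::finite^'m::finite) ** ((B::real^'k::finite^'n) - C) = A ** B - A ** C"
  by (simp add: matrix_matrix_mult_def vec_eq_iff sum_subtractf right_diff_distrib)
lemma mm_scale_l: "(c *\<^sub>R (A::real^'n::finite^'m::finite)) ** (B::real^'k::finite^'n) = c *\<^sub>R (A ** B)"
  by (simp add: matrix_matrix_mult_def vec_eq_iff sum_distrib_left mult.assoc)
lemma mm_scale_r: "(A::real^'n::finite^'m::finite) ** (c *\<^sub>R (B::real^'k::finite^'n)) = c *\<^sub>R (A ** B)"
  by (simp add: matrix_matrix_mult_def vec_eq_iff sum_distrib_left mult.left_commute)
lemma mm_neg_l: "(- (A::real^'n::finite^'m::finite)) ** (B::real^'k::finite^'n) = - (A ** B)"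
  by (simp add: matrix_matrix_mult_def vec_eq_iff sum_negf)
lemma mm_neg_r: "(A::real^'n::finite^'m::finite) ** (- (B::real^'k::finite^'n)) = - (A ** B)"
  by (simp add: matrix_matrix_mult_def vec_eq_iff sum_negf)

lemma sv_scale: "sv (c *\<^sub>R v) = \<bar>c\<bar> * sv v"
  unfolding sv_def by (simp add: abs_mult sum_distrib_left)
lemma sv_minus: "sv (- v) = sv v"
  unfolding sv_def by simp

lemma minv_line_deriv:
  fixes p X :: "real^'n::finite^'n"
  assumes inv: "invertible p"
  shows "((\<lambda>t. matrix_inv (p + t *\<^sub>R X) $ k $ l) has_real_derivative
            (- (matrix_inv p ** X ** matrix_inv p)) $ k $ l) (at 0)"
proof -
  define P where "P = matrix_inv p"
  have Pp: "P ** p = mat 1" "p ** P = mat 1" unfolding P_def using minv_works[OF inv] by auto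
  define c where "c = SA P * SA X"
  have c0: "c \<ge> 0" unfolding c_def using SA_nonneg[of P] SA_nonneg[of X] by simp
  define d where "d = 1 / (2 * c + 2)"
  have d0: "d > 0" unfolding d_def using c0 by simp
  have small: "\<bar>t\<bar> * c \<le> 1/2" if "\<bar>t\<bar> < d" for t
  proof -
    have "\<bar>t\<bar> * c \<le> d * c" using that c0 by (simp add: mult_right_mono)
    also have "\<dots> = c / (2 * c + 2)" unfolding d_def by simp
    also have "\<dots> \<le> 1/2" using c0 by (simp add: field_simps)
    finally show ?thesis .
  qed
  have invt: "invertible (p + t *\<^sub>R X)" if "\<bar>t\<bar> < d" for t
  proof -
    have "\<forall>v. (p + t *\<^sub>R X) *v v = 0 \<longrightarrow> v = 0"
    proof (intro allI impI)
      fix v assume "(p + t *\<^sub>R X) *v v = 0"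
      then have "p *v v = - (t *\<^sub>R (X *v v))"
        by (simp add: matrix_vector_mult_add_rdistrib scaleR_matrix_vector_assoc eq_neg_iff_add_eq_0)
      then have pv: "P *v (p *v v) = P *v (- (t *\<^sub>R (X *v v)))" by simp
      have "v = - (t *\<^sub>R ((P ** X) *v v))"
      proof -
        have "P *v (- (t *\<^sub>R (X *v v))) = - (P *v (t *\<^sub>R (X *v v)))"
          using matrix_vector_mult_diff_distrib[of P 0 "t *\<^sub>R (X *v v)"] by simp
        also have "\<dots> = - (t *\<^sub>R (P *v (X *v v)))" by (simp add: matrix_vector_mult_scaleR)
        also have "\<dots> = - (t *\<^sub>R ((P ** X) *v v))" by (simp add: matrix_vector_mul_assoc)
        moreover have "P *v (p *v v) = v" by (simp add: matrix_vector_mul_assoc Pp)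
        ultimately show ?thesis using pv by simp
      qed
      then have "sv v = \<bar>t\<bar> * sv ((P ** X) *v v)" by (metis sv_minus sv_scale)
      also have "\<dots> \<le> \<bar>t\<bar> * (SA (P ** X) * sv v)" by (intro mult_left_mono sv_mult) auto
      also have "\<dots> \<le> \<bar>t\<bar> * (c * sv v)" unfolding c_def
        by (intro mult_left_mono mult_right_mono SA_mult sv_nonneg) auto
      also have "\<dots> \<le> (1/2) * sv v" using mult_right_mono[OF small[OF that] sv_nonneg[of v]]
        by (simp add: mult.assoc)
      finally have "sv v \<le> 0" using sv_nonneg[of v] by simp
      then show "v = 0" by (rule sv_zero)
    qed
    then show ?thesis using matrix_left_invertible_ker invertible_left_inverse by blast
  qed
  define R where "R = (\<lambda>t. matrix_inv (p + t *\<^sub>R X))"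
  have Req: "R t - P = - (t *\<^sub>R (R t ** X ** P))" if "\<bar>t\<bar> < d" for t
  proof -
    have "R t ** (p + t *\<^sub>R X) = mat 1" unfolding R_def using minv_works(2)[OF invt[OF that]] .
    then have "(R t ** (p + t *\<^sub>R X)) ** P = P" by simp
    then have "R t + t *\<^sub>R (R t ** X ** P) = P"
      by (simp add: mm_add_l mm_add_r mm_scale_r mm_scale_l Pp flip: matrix_mul_assoc)
    then show ?thesis by (simp add: algebra_simps)
  qed
  have Rb: "SA (R t) \<le> 2 * SA P" if "\<bar>t\<bar> < d" for t
  proof -
    have "R t = P - t *\<^sub>R (R t ** X ** P)" using Req[OF that] by (simp add: algebra_simps)
    then have "SA (R t) \<le> SA P + \<bar>t\<bar> * SA (R t ** X ** P)"
      by (metis SA_diff SA_scale)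
    also have "SA (R t ** X ** P) \<le> SA (R t) * c"
    proof -
      have "SA (R t ** X ** P) \<le> SA (R t ** X) * SA P" by (rule SA_mult)
      also have "\<dots> \<le> SA (R t) * SA X * SA P"
        by (intro mult_right_mono SA_mult SA_nonneg)
      finally show ?thesis unfolding c_def by (simp add: mult_ac)
    qed
    then have "\<bar>t\<bar> * SA (R t ** X ** P) \<le> \<bar>t\<bar> * (SA (R t) * c)" by (simp add: mult_left_mono)
    also have "\<dots> = (\<bar>t\<bar> * c) * SA (R t)" by simp
    also have "\<dots> \<le> (1/2) * SA (R t)" using small[OF that] SA_nonneg by (intro mult_right_mono) auto
    finally show ?thesis by simp
  qed
  have Rd: "SA (R t - P) \<le> \<bar>t\<bar> * (2 * SA P * c)" if "\<bar>t\<bar> < d" for t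
  proof -
    have "SA (R t - P) = \<bar>t\<bar> * SA (R t ** X ** P)" using Req[OF that] by (simp add: SA_minus SA_scale)
    also have "SA (R t ** X ** P) \<le> SA (R t) * c"
    proof -
      have "SA (R t ** X ** P) \<le> SA (R t ** X) * SA P" by (rule SA_mult)
      also have "\<dots> \<le> SA (R t) * SA X * SA P"
        by (intro mult_right_mono SA_mult SA_nonneg)
      finally show ?thesis unfolding c_def by (simp add: mult_ac)
    qed
    also have "SA (R t) * c \<le> 2 * SA P * c" using Rb[OF that] c0 by (simp add: mult_right_mono)
    finally show ?thesis by (simp add: mult_left_mono)
  qed
  define K where "K = 2 * SA P * c * SA X * SA P + 1"
  have K0: "K > 0"
  proof -
    have "0 \<le> 2 * SA P * c * SA X * SA P" using SA_nonneg[of P] SA_nonneg[of X] c0 by simp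
    then show ?thesis unfolding K_def by linarith
  qed
  have R0: "R 0 = P" unfolding R_def P_def by simp
  show ?thesis
    unfolding has_field_derivative_iff LIM_eq
  proof (intro allI impI)
    fix r :: real assume r: "r > 0"
    show "\<exists>s>0. \<forall>y. y \<noteq> 0 \<and> norm (y - 0) < s \<longrightarrow>
      norm ((matrix_inv (p + y *\<^sub>R X) $ k $ l - matrix_inv (p + 0 *\<^sub>R X) $ k $ l) / (y - 0)
            - (- (matrix_inv p ** X ** matrix_inv p)) $ k $ l) < r"
    proof (intro exI[of _ "min d (r / K)"] conjI allI impI)
      show "min d (r / K) > 0" using d0 r K0 by simp
      fix y :: real assume y: "y \<noteq> 0 \<and> norm (y - 0) < min d (r / K)"
      then have yd: "\<bar>y\<bar> < d" and yr: "\<bar>y\<bar> < r / K" by auto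
      have q: "(R y $ k $ l - P $ k $ l) / y = - ((R y ** X ** P) $ k $ l)"
      proof -
        have "R y $ k $ l - P $ k $ l = (R y - P) $ k $ l" by simp
        also have "\<dots> = - (y * (R y ** X ** P) $ k $ l)" using Req[OF yd] by simp
        finally show ?thesis using y by simp
      qed
      have "\<bar>(R y $ k $ l - P $ k $ l) / y - (- (P ** X ** P)) $ k $ l\<bar>
            = \<bar>((P - R y) ** X ** P) $ k $ l\<bar>"
        unfolding q by (simp add: mm_diff_r)
      also have "\<dots> \<le> SA ((P - R y) ** X ** P)" by (rule SA_entry)
      also have "\<dots> \<le> SA (P - R y) * SA X * SA P"
      proof -
        have "SA ((P - R y) ** X ** P) \<le> SA ((P - R y) ** X) * SA P" by (rule SA_mult)
        also have "\<dots> \<le> SA (P - R y) * SA X * SA P"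
          by (intro mult_right_mono SA_mult SA_nonneg)
        finally show ?thesis .
      qed
      also have "\<dots> \<le> (\<bar>y\<bar> * (2 * SA P * c)) * SA X * SA P"
      proof -
        have "SA (P - R y) = SA (R y - P)" by (metis SA_minus minus_diff_eq)
        then have "SA (P - R y) \<le> \<bar>y\<bar> * (2 * SA P * c)" using Rd[OF yd] by simp
        then show ?thesis by (intro mult_right_mono SA_nonneg) auto
      qed
      also have "\<dots> = \<bar>y\<bar> * (K - 1)" unfolding K_def by (simp add: algebra_simps)
      also have "\<dots> < r"
      proof -
        have "\<bar>y\<bar> * (K - 1) \<le> \<bar>y\<bar> * K" by (simp add: mult_left_mono)
        also have "\<dots> < r" using yr K0 by (simp add: pos_less_divide_eq)
        finally show ?thesis .
      qed
      finally show "norm ((matrix_inv (p + y *\<^sub>R X) $ k $ l - matrix_inv (p + 0 *\<^sub>R X) $ k $ l) / (y - 0)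
            - (- (matrix_inv p ** X ** matrix_inv p)) $ k $ l) < r"
        using R0 unfolding R_def P_def by simp
    qed
  qed
qed


definition T4 :: "real^'n::finite^'n \<Rightarrow> real^'n^'n \<Rightarrow> real^'n^'n \<Rightarrow> real^'n^'n \<Rightarrow> real" where
  "T4 M N A B = (\<Sum>k\<in>UNIV. \<Sum>l\<in>UNIV. \<Sum>r\<in>UNIV. \<Sum>s\<in>UNIV. M$k$l * N$r$s * A$k$r * B$s$l)"

lemma T4_trace: "T4 M N A B = trace (A ** N ** B ** transpose M)"
proof -
  have "trace (A ** N ** B ** transpose M) =
     (\<Sum>k\<in>UNIV. \<Sum>l\<in>UNIV. (\<Sum>s\<in>UNIV. (\<Sum>r\<in>UNIV. A$k$r * N$r$s) * B$s$l) * M$k$l)"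
    by (simp add: trace_def matrix_matrix_mult_def transpose_def)
  also have "\<dots> = (\<Sum>k\<in>UNIV. \<Sum>l\<in>UNIV. \<Sum>s\<in>UNIV. \<Sum>r\<in>UNIV. M$k$l * N$r$s * A$k$r * B$s$l)"
    by (simp add: sum_distrib_left sum_distrib_right mult_ac)
  also have "\<dots> = T4 M N A B"
    unfolding T4_def by (rule sum.cong[OF refl], rule sum.cong[OF refl], rule sum.swap)
  finally show ?thesis by simp
qed

lemma gS2_T4: "gS2 q A B = 1/4 * T4 (matrix_inv q) (matrix_inv q) A B"
  unfolding gS2_def T4_def by simp

lemma gS2_trace: "gS2 q A B = 1/4 * trace (A ** matrix_inv q ** B ** transpose (matrix_inv q))"
  unfolding gS2_T4 T4_trace ..

lemma gS2_dd:
  fixes p X Y Z :: "real^'n::finite^'n"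
  assumes inv: "invertible p"
  shows "dirderiv (\<lambda>q. gS2 q Y Z) p X =
     1/4 * (T4 (- (matrix_inv p ** X ** matrix_inv p)) (matrix_inv p) Y Z
          + T4 (matrix_inv p) (- (matrix_inv p ** X ** matrix_inv p)) Y Z)"
proof -
  define P where "P = matrix_inv p"
  define D where "D = - (matrix_inv p ** X ** matrix_inv p)"
  have e: "((\<lambda>t. matrix_inv (p + t *\<^sub>R X) $ k $ l) has_real_derivative D $ k $ l) (at 0)" for k l
    unfolding D_def by (rule minv_line_deriv[OF inv])
  have m0: "matrix_inv (p + 0 *\<^sub>R X) = P" unfolding P_def by simp
  have "((\<lambda>t. gS2 (p + t *\<^sub>R X) Y Z) has_real_derivative
     1/4 * (\<Sum>k\<in>UNIV. \<Sum>l\<in>UNIV. \<Sum>r\<in>UNIV. \<Sum>s\<in>UNIV.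
        (matrix_inv (p + 0 *\<^sub>R X) $k$l * D$r$s + D$k$l * matrix_inv (p + 0 *\<^sub>R X) $r$s) * Y$k$r * Z$s$l)) (at 0)"
    unfolding gS2_def
    by (intro DERIV_cmult DERIV_sum DERIV_cmult_right DERIV_mult' e)
  then have "dirderiv (\<lambda>q. gS2 q Y Z) p X = 1/4 * (\<Sum>k\<in>UNIV. \<Sum>l\<in>UNIV. \<Sum>r\<in>UNIV. \<Sum>s\<in>UNIV.
        (matrix_inv (p + 0 *\<^sub>R X) $k$l * D$r$s + D$k$l * matrix_inv (p + 0 *\<^sub>R X) $r$s) * Y$k$r * Z$s$l)"
    unfolding dirderiv_def
    by (intro vector_derivative_at) (simp add: has_real_derivative_iff_has_vector_derivative)
  also have "\<dots> = 1/4 * (T4 D P Y Z + T4 P D Y Z)"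
    unfolding T4_def m0 by (simp add: sum.distrib[symmetric] algebra_simps)
  finally show ?thesis unfolding D_def P_def .
qed


lemma trace_neg: "trace (- (A::real^'n::finite^'n)) = - trace A"
  by (simp add: trace_def sum_negf)
lemma trace_scale: "trace (c *\<^sub>R (A::real^'n::finite^'n)) = c * trace A"
  by (simp add: trace_def sum_distrib_left)
lemma transpose_neg: "transpose (- (A::real^'n::finite^'m::finite)) = - transpose A"
  by (simp add: transpose_def vec_eq_iff)

lemma Sym2_iff: "A \<in> Sym2 \<longleftrightarrow> transpose A = A"
  unfolding Sym2_def by simp

context
  fixes p :: "real^'n::finite^'n"
  assumes inv: "invertible p" and ps: "transpose p = p"
begin

definition "PP = matrix_inv p"
definition "tr6 A B C = trace (A ** PP ** B ** PP ** C ** PP)"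

lemma PPs: "transpose PP = PP" unfolding PP_def using minv_sym[OF inv ps] .

lemma dd_sym:
  assumes "transpose X = X"
  shows "dirderiv (\<lambda>q. gS2 q Y Z) p X = -1/4 * (tr6 Y Z X + tr6 Y X Z)"
proof -
  have tD: "transpose (- (PP ** X ** PP)) = - (PP ** X ** PP)"
    by (simp add: transpose_neg matrix_transpose_mul PPs assms matrix_mul_assoc)
  have "dirderiv (\<lambda>q. gS2 q Y Z) p X =
     1/4 * (T4 (- (PP ** X ** PP)) PP Y Z + T4 PP (- (PP ** X ** PP)) Y Z)"
    using gS2_dd[OF inv] unfolding PP_def .
  also have "\<dots> = 1/4 * (trace (Y ** PP ** Z ** (- (PP ** X ** PP))) + trace (Y ** (- (PP ** X ** PP)) ** Z ** PP))"
    unfolding T4_trace tD PPs ..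
  also have "\<dots> = -1/4 * (tr6 Y Z X + tr6 Y X Z)"
    unfolding tr6_def by (simp add: mm_neg_l mm_neg_r trace_neg matrix_mul_assoc algebra_simps)
  finally show ?thesis .
qed

lemma tr6_cyc: "tr6 X Y Z = tr6 Y Z X"
proof -
  have "tr6 X Y Z = trace ((X ** PP) ** (Y ** PP ** Z ** PP))"
    unfolding tr6_def by (simp add: matrix_mul_assoc)
  also have "\<dots> = trace ((Y ** PP ** Z ** PP) ** (X ** PP))" by (rule trace_mul_sym)
  also have "\<dots> = tr6 Y Z X" unfolding tr6_def by (simp add: matrix_mul_assoc)
  finally show ?thesis .
qed

lemma gS2_w:
  "gS2 p ((-(1/2)) *\<^sub>R (X ** PP ** Y + Y ** PP ** X)) Z = -1/8 * (tr6 X Y Z + tr6 Y X Z)"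
proof -
  have "((-(1/2)) *\<^sub>R (X ** PP ** Y + Y ** PP ** X)) ** PP ** Z ** transpose PP
     = (-(1/2)) *\<^sub>R (X ** PP ** Y ** PP ** Z ** PP + Y ** PP ** X ** PP ** Z ** PP)"
    by (simp only: mm_scale_l mm_add_r PPs)
  then show ?thesis unfolding gS2_trace PP_def[symmetric] tr6_def
    by (simp add: trace_scale trace_add trace_neg)
qed

lemma gS2_diff: "gS2 p (A - B) Z = gS2 p A Z - gS2 p B Z"
  unfolding gS2_trace by (simp add: mm_diff_r trace_sub algebra_simps)

lemma gS2_self:
  assumes "transpose d = d"
  shows "gS2 p d (p ** d ** p) = 1/4 * (\<Sum>k\<in>UNIV. \<Sum>r\<in>UNIV. (d$k$r)^2)"
proof -
  have Pp: "PP ** p = mat 1" "p ** PP = mat 1" unfolding PP_def using minv_works[OF inv] by auto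
  have "PP ** (p ** d ** p) ** PP = (PP ** p) ** d ** (p ** PP)" by (simp add: matrix_mul_assoc)
  also have "\<dots> = d" using Pp by simp
  finally have e: "PP ** (p ** d ** p) ** PP = d" .
  have "gS2 p d (p ** d ** p) = 1/4 * trace (d ** (PP ** (p ** d ** p) ** PP))"
    unfolding gS2_trace PP_def[symmetric] PPs by (simp add: matrix_mul_assoc)
  also have "\<dots> = 1/4 * trace (d ** d)" unfolding e ..
  also have "trace (d ** d) = (\<Sum>k\<in>UNIV. \<Sum>r\<in>UNIV. d$k$r * d$r$k)"
    by (simp add: trace_def matrix_matrix_mult_def)
  also have "\<dots> = (\<Sum>k\<in>UNIV. \<Sum>r\<in>UNIV. (d$k$r)^2)"
  proof -
    have "d$r$k = d$k$r" for k r using arg_cong[OF assms, of "\<lambda>M. M$k$r"] by (simp add: transpose_def)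
    then show ?thesis by (simp add: power2_eq_square)
  qed
  finally show ?thesis .
qed

lemma christoffel_gS2:
  assumes Xs: "X \<in> Sym2" and Ys: "Y \<in> Sym2"
  shows "christoffel Sym2 gS2 p X Y = (-(1/2)) *\<^sub>R (X ** matrix_inv p ** Y + Y ** matrix_inv p ** X)"
proof -
  define w where "w = (-(1/2)) *\<^sub>R (X ** PP ** Y + Y ** PP ** X)"
  have tX: "transpose X = X" and tY: "transpose Y = Y" using Xs Ys Sym2_iff by auto
  let ?K = "\<lambda>Z. (dirderiv (\<lambda>q. gS2 q Y Z) p X + dirderiv (\<lambda>q. gS2 q X Z) p Y - dirderiv (\<lambda>q. gS2 q X Y) p Z) / 2"
  have wK: "gS2 p w Z = ?K Z" if "Z \<in> Sym2" for Z
  proof -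
    have tZ: "transpose Z = Z" using that Sym2_iff by auto
    have "?K Z = (-1/4 * (tr6 Y Z X + tr6 Y X Z) + -1/4 * (tr6 X Z Y + tr6 X Y Z) - -1/4 * (tr6 X Y Z + tr6 X Z Y)) / 2"
      using dd_sym[OF tX] dd_sym[OF tY] dd_sym[OF tZ] by simp
    also have "\<dots> = -1/8 * (tr6 X Y Z + tr6 Y X Z)" by (simp add: tr6_cyc[of X Y Z] field_simps)
    finally show ?thesis unfolding w_def gS2_w by simp
  qed
  have wS: "w \<in> Sym2"
  proof -
    have a: "transpose (X ** PP ** Y) = Y ** PP ** X"
      by (simp add: matrix_transpose_mul PPs tX tY matrix_mul_assoc)
    have b: "transpose (Y ** PP ** X) = X ** PP ** Y"
      by (simp add: matrix_transpose_mul PPs tX tY matrix_mul_assoc)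
    have c: "transpose (c *\<^sub>R (A + B)) = c *\<^sub>R (transpose A + transpose B)" for c and A B :: "real^'n^'n"
      by (simp add: transpose_def vec_eq_iff)
    show ?thesis unfolding w_def Sym2_iff c a b by (simp add: add.commute)
  qed
  have uniq: "w' = w" if "w' \<in> Sym2 \<and> (\<forall>Z\<in>Sym2. gS2 p w' Z = ?K Z)" for w'
  proof -
    define d where "d = w' - w"
    have td: "transpose d = d" using that wS unfolding d_def Sym2_iff
      by (simp add: transpose_def vec_eq_iff)
    have Zs: "p ** d ** p \<in> Sym2" unfolding Sym2_iff
      by (simp add: matrix_transpose_mul td ps matrix_mul_assoc)
    have e1: "gS2 p w' (p ** d ** p) = ?K (p ** d ** p)" using that Zs by blast
    have e2: "gS2 p w (p ** d ** p) = ?K (p ** d ** p)" using wK[OF Zs] .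
    have "gS2 p d (p ** d ** p) = gS2 p w' (p ** d ** p) - gS2 p w (p ** d ** p)"
      unfolding d_def by (rule gS2_diff)
    then have "gS2 p d (p ** d ** p) = 0" using e1 e2 by simp
    then have "(\<Sum>k\<in>UNIV. \<Sum>r\<in>UNIV. (d$k$r)^2) = 0" using gS2_self[OF td] by simp
    then have "\<forall>k\<in>UNIV. (\<Sum>r\<in>UNIV. (d$k$r)^2) = 0"
      by (subst sum_nonneg_eq_0_iff[symmetric]) (auto intro: sum_nonneg)
    then have "d$k$r = 0" for k r by (simp add: sum_nonneg_eq_0_iff)
    then show ?thesis unfolding d_def by (simp add: vec_eq_iff)
  qed
  have "christoffel Sym2 gS2 p X Y = w"
    unfolding christoffel_def
    by (rule the_equality) (use wS wK uniq in blast)+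
  then show ?thesis unfolding w_def PP_def .
qed

end


lemma bl_vec_lambda:
  fixes g :: "'i::finite \<Rightarrow> 'a::real_normed_vector \<Rightarrow> 'b::real_normed_vector"
  assumes "\<And>i. bounded_linear (g i)"
  shows "bounded_linear (\<lambda>h. \<chi> i. g i h)"
proof -
  have "\<forall>i. \<exists>K. \<forall>x. norm (g i x) \<le> norm x * K"
    using assms bounded_linear.bounded by blast
  then obtain K where K: "\<And>i x. norm (g i x) \<le> norm x * K i" by metis
  show ?thesis
  proof (rule bounded_linear_intro[where K="\<Sum>i\<in>UNIV. K i"])
    fix x y show "(\<chi> i. g i (x + y)) = (\<chi> i. g i x) + (\<chi> i. g i y)"
      using assms by (simp add: vec_eq_iff linear_add bounded_linear.linear)
  next
    fix r x show "(\<chi> i. g i (r *\<^sub>R x)) = r *\<^sub>R (\<chi> i. g i x)"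
      using assms by (simp add: vec_eq_iff linear_scale bounded_linear.linear)
  next
    fix x
    have "norm (\<chi> i. g i x) \<le> (\<Sum>i\<in>UNIV. norm ((\<chi> i. g i x) $ i))"
      unfolding norm_vec_def by (rule L2_set_le_sum) simp
    also have "\<dots> \<le> (\<Sum>i\<in>UNIV. norm x * K i)" by (intro sum_mono) (simp add: K)
    also have "\<dots> = norm x * (\<Sum>i\<in>UNIV. K i)" by (simp add: sum_distrib_left)
    finally show "norm (\<chi> i. g i x) \<le> norm x * (\<Sum>i\<in>UNIV. K i)" .
  qed
qed

lemma has_derivative_vec_lambda:
  fixes f :: "'i::finite \<Rightarrow> 'a::real_normed_vector \<Rightarrow> 'b::real_normed_vector"
  assumes "\<And>i. (f i has_derivative f' i) (at y)"
  shows "((\<lambda>z. \<chi> i. f i z) has_derivative (\<lambda>h. \<chi> i. f' i h)) (at y)"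
proof -
  have bl: "bounded_linear (\<lambda>h. \<chi> i. f' i h)"
    using assms has_derivative_bounded_linear by (intro bl_vec_lambda) blast
  have t: "((\<lambda>z. (1 / norm (z - y)) *\<^sub>R (f i z - (f i y + f' i (z - y)))) \<longlongrightarrow> 0) (at y)" for i
    using assms[of i] unfolding has_derivative_within by simp
  have "((\<lambda>z. \<chi> i. (1 / norm (z - y)) *\<^sub>R (f i z - (f i y + f' i (z - y)))) \<longlongrightarrow> (\<chi> i. 0)) (at y)"
    by (rule tendsto_vec_lambda) (rule t)
  moreover have "(\<lambda>z. \<chi> i. (1 / norm (z - y)) *\<^sub>R (f i z - (f i y + f' i (z - y))))
      = (\<lambda>z. (1 / norm (z - y)) *\<^sub>R ((\<chi> i. f i z) - ((\<chi> i. f i y) + (\<chi> i. f' i (z - y)))))"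
    by (rule ext) (simp add: vec_eq_iff)
  moreover have "(\<chi> i. (0::'b)) = (0 :: 'b^'i)" by (simp add: vec_eq_iff)
  ultimately show ?thesis unfolding has_derivative_within using bl by simp
qed

lemma dirderiv_mat:
  fixes c :: "'n::finite \<Rightarrow> 'n \<Rightarrow> real^'m::finite \<Rightarrow> real"
  assumes "\<And>k l. c k l differentiable (at y)"
  shows "dirderiv (\<lambda>z. \<chi> k l. c k l z) y v = (\<chi> k l. dirderiv (c k l) y v)"
proof -
  define c' where "c' = (\<lambda>k l. frechet_derivative (c k l) (at y))"
  have d: "(c k l has_derivative c' k l) (at y)" for k l
    unfolding c'_def using assms frechet_derivative_works by blast
  have "((\<lambda>z. \<chi> k. \<chi> l. c k l z) has_derivative (\<lambda>h. \<chi> k. \<chi> l. c' k l h)) (at y)"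
    by (intro has_derivative_vec_lambda d)
  from dirderiv_hd(2)[OF this] show ?thesis using dirderiv_hd(2)[OF d] by simp
qed

lemma pd_mat:
  fixes c :: "'n::finite \<Rightarrow> 'n \<Rightarrow> real^'m::finite \<Rightarrow> real"
  assumes "\<And>k l. c k l differentiable (at y)"
  shows "pd i (\<lambda>z. \<chi> k l. c k l z) y = (\<chi> k l. pd i (c k l) y)"
  unfolding pd_def using dirderiv_mat[OF assms] .

lemma pd_sum:
  fixes f :: "'k \<Rightarrow> real^'n::finite \<Rightarrow> real"
  assumes "finite S" "\<And>m. m \<in> S \<Longrightarrow> f m differentiable (at y)"
  shows "pd i (\<lambda>z. \<Sum>m\<in>S. f m z) y = (\<Sum>m\<in>S. pd i (f m) y)"
proof -
  define f' where "f' = (\<lambda>m. frechet_derivative (f m) (at y))"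
  have d: "(f m has_derivative f' m) (at y)" if "m \<in> S" for m
    unfolding f'_def using assms(2)[OF that] frechet_derivative_works by blast
  have "((\<lambda>z. \<Sum>m\<in>S. f m z) has_derivative (\<lambda>h. \<Sum>m\<in>S. f' m h)) (at y)"
    by (intro has_derivative_sum d)
  from pd_hd[OF this] show ?thesis using pd_hd[OF d] by simp
qed

lemma pd_coord: "pd i (\<lambda>z::real^'n::finite. z $ m) y = (if i = m then 1 else 0)"
proof -
  have "((\<lambda>z::real^'n. z $ m) has_derivative (\<lambda>h. h $ m)) (at y)"
    using bounded_linear_vec_nth by (rule bounded_linear_imp_has_derivative)
  from pd_hd[OF this] show ?thesis by (simp add: axis_def)
qed

lemma coord_diff: "(\<lambda>z::real^'n::finite. z $ m) differentiable (at y)"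
  using bounded_linear_vec_nth bounded_linear_imp_differentiable by blast


lemma pd_euler:
  fixes g :: "'n::finite \<Rightarrow> real^'n \<Rightarrow> real"
  assumes "\<And>m. g m differentiable (at y)"
  shows "pd b (\<lambda>z. \<Sum>m\<in>UNIV. z$m * g m z) y = g b y + (\<Sum>m\<in>UNIV. y$m * pd b (g m) y)"
proof -
  have "pd b (\<lambda>z. \<Sum>m\<in>UNIV. z$m * g m z) y = (\<Sum>m\<in>UNIV. pd b (\<lambda>z. z$m * g m z) y)"
    by (rule pd_sum) (auto intro!: differentiable_mult coord_diff assms)
  also have "\<dots> = (\<Sum>m\<in>UNIV. (if b = m then 1 else 0) * g m y + y$m * pd b (g m) y)"
    by (intro sum.cong refl) (simp add: pd_mult[OF coord_diff assms] pd_coord)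
  also have "\<dots> = g b y + (\<Sum>m\<in>UNIV. y$m * pd b (g m) y)"
  proof -
    have "(\<Sum>m\<in>UNIV. (if b = m then 1 else 0) * g m y) = (\<Sum>m\<in>UNIV. if b = m then g m y else 0)"
      by (intro sum.cong refl) simp
    also have "\<dots> = g b y" by (simp add: sum.delta')
    finally have "(\<Sum>m\<in>UNIV. (if b = m then 1 else 0) * g m y) = g b y" .
    then show ?thesis by (simp only: sum.distrib)
  qed
  finally show ?thesis .
qed

context
  fixes Vol :: "real^'n::finite \<Rightarrow> real" and U :: "(real^'n) set"
  assumes U_open: "open U"
    and U_cone: "\<And>x t. x \<in> U \<Longrightarrow> t > 0 \<Longrightarrow> t *\<^sub>R x \<in> U"
    and Vol_pos: "\<And>x. x \<in> U \<Longrightarrow> Vol x > 0"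
    and Vol_smooth: "smooth_on U Vol"
    and Vol_homog: "\<And>x t. x \<in> U \<Longrightarrow> t > 0 \<Longrightarrow> Vol (t *\<^sub>R x) = t powr (7/3) * Vol x"
    and G_posdef: "\<And>x v. x \<in> U \<Longrightarrow> v \<noteq> 0 \<Longrightarrow> Gmet (potF Vol) x v v > 0"
begin

lemma F_smooth: "smooth_on U (potF Vol)"
proof -
  have e: "potF Vol = (\<lambda>z. (-3) * ln (Vol z))" by (rule ext) (simp add: potF_def)
  show ?thesis unfolding e
    by (intro smooth_mult[OF U_open smooth_const] smooth_ln[OF U_open Vol_pos Vol_smooth]) auto
qed

lemma sm1: "smooth_on U (pd i (potF Vol))" using smooth_pd[OF F_smooth] .
lemma sm2: "smooth_on U (pd i (pd j (potF Vol)))" using smooth_pd[OF sm1] .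
lemma sm3: "smooth_on U (pd i (pd j (pd k (potF Vol))))" using smooth_pd[OF sm2] .

lemma sym2: "y \<in> U \<Longrightarrow> pd i (pd j (potF Vol)) y = pd j (pd i (potF Vol)) y"
  using schwarz[OF U_open _ smooth_Ck[OF F_smooth]] by blast

lemma sym3a: "y \<in> U \<Longrightarrow> pd i (pd j (pd k (potF Vol))) y = pd j (pd i (pd k (potF Vol))) y"
  using schwarz[OF U_open _ smooth_Ck[OF sm1]] by blast

lemma sym3b: "y \<in> U \<Longrightarrow> pd i (pd j (pd k (potF Vol))) y = pd i (pd k (pd j (potF Vol))) y"
  by (rule pd_local[OF U_open]) (auto intro: sym2)

lemma euler0:
  assumes y: "y \<in> U"
  shows "(\<Sum>m\<in>UNIV. y$m * pd m (potF Vol) y) = -7"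
proof -
  have eq: "potF Vol (y + t *\<^sub>R y) = potF Vol y - 7 * ln (1 + t)" if "t \<in> {-1<..<1}" for t
  proof -
    have t1: "1 + t > 0" using that by simp
    have "y + t *\<^sub>R y = (1 + t) *\<^sub>R y" by (simp add: algebra_simps)
    then have "Vol (y + t *\<^sub>R y) = (1 + t) powr (7/3) * Vol y" using Vol_homog[OF y t1] by simp
    then have "ln (Vol (y + t *\<^sub>R y)) = (7/3) * ln (1 + t) + ln (Vol y)"
      using t1 Vol_pos[OF y] by (simp add: ln_mult)
    then show ?thesis unfolding potF_def by simp
  qed
  have "((\<lambda>t. potF Vol y - 7 * ln (1 + t)) has_real_derivative -7) (at 0)"
    by (auto intro!: derivative_eq_intros)
  then have "((\<lambda>t. potF Vol (y + t *\<^sub>R y)) has_real_derivative -7) (at 0)"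
    by (rule has_field_derivative_transform_within_open[where S="{-1<..<1}"]) (auto simp: eq)
  then have "dirderiv (potF Vol) y y = -7"
    unfolding dirderiv_def
    by (intro vector_derivative_at) (simp add: has_real_derivative_iff_has_vector_derivative)
  then show ?thesis using dirderiv_sum[OF smooth_diff[OF F_smooth y]] by simp
qed

lemma euler1:
  assumes y: "y \<in> U"
  shows "(\<Sum>m\<in>UNIV. y$m * pd a (pd m (potF Vol)) y) = - pd a (potF Vol) y"
proof -
  have "pd a (\<lambda>z. \<Sum>m\<in>UNIV. z$m * pd m (potF Vol) z) y = pd a (\<lambda>z. -7) y"
    by (rule pd_local[OF U_open y]) (simp add: euler0)
  also have "\<dots> = 0" by (rule pd_const)
  finally have "pd a (\<lambda>z. \<Sum>m\<in>UNIV. z$m * pd m (potF Vol) z) y = 0" .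
  moreover have "pd a (\<lambda>z. \<Sum>m\<in>UNIV. z$m * pd m (potF Vol) z) y
      = pd a (potF Vol) y + (\<Sum>m\<in>UNIV. y$m * pd a (pd m (potF Vol)) y)"
    by (rule pd_euler) (rule smooth_diff[OF sm1 y])
  ultimately show ?thesis by simp
qed

lemma euler2:
  assumes y: "y \<in> U"
  shows "(\<Sum>m\<in>UNIV. y$m * pd b (pd a (pd m (potF Vol))) y)
           = - (pd a (pd b (potF Vol)) y + pd b (pd a (potF Vol)) y)"
proof -
  have "pd b (\<lambda>z. (\<Sum>m\<in>UNIV. z$m * pd a (pd m (potF Vol)) z) + pd a (potF Vol) z) y = pd b (\<lambda>z. 0) y"
    by (rule pd_local[OF U_open y]) (simp add: euler1)
  also have "\<dots> = 0" by (rule pd_const)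
  finally have "pd b (\<lambda>z. (\<Sum>m\<in>UNIV. z$m * pd a (pd m (potF Vol)) z) + pd a (potF Vol) z) y = 0" .
  moreover have "pd b (\<lambda>z. (\<Sum>m\<in>UNIV. z$m * pd a (pd m (potF Vol)) z) + pd a (potF Vol) z) y
      = pd b (\<lambda>z. \<Sum>m\<in>UNIV. z$m * pd a (pd m (potF Vol)) z) y + pd b (pd a (potF Vol)) y"
  proof (rule pd_add)
    show "(\<lambda>z. \<Sum>m\<in>UNIV. z$m * pd a (pd m (potF Vol)) z) differentiable (at y)"
      by (auto intro!: differentiable_sum differentiable_mult coord_diff smooth_diff[OF sm2 y])
    show "pd a (potF Vol) differentiable (at y)" by (rule smooth_diff[OF sm1 y])
  qed
  moreover have "pd b (\<lambda>z. \<Sum>m\<in>UNIV. z$m * pd a (pd m (potF Vol)) z) y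
      = pd a (pd b (potF Vol)) y + (\<Sum>m\<in>UNIV. y$m * pd b (pd a (pd m (potF Vol))) y)"
    by (rule pd_euler) (rule smooth_diff[OF sm2 y])
  ultimately show ?thesis by simp
qed

lemma H_inv:
  assumes y: "y \<in> U"
  shows "invertible (\<chi> i j. pd i (pd j (potF Vol)) y)"
proof -
  let ?H = "\<chi> i j. pd i (pd j (potF Vol)) y"
  have "\<forall>v. ?H *v v = 0 \<longrightarrow> v = 0"
  proof (intro allI impI)
    fix v assume hv: "?H *v v = 0"
    have "Gmet (potF Vol) y v v = (\<Sum>k\<in>UNIV. v$k * (?H *v v)$k)"
      unfolding Gmet_def matrix_vector_mult_def by (simp add: sum_distrib_left mult_ac)
    also have "\<dots> = 0" using hv by simp
    finally show "v = 0" using G_posdef[OF y, of v] by (cases "v = 0") auto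
  qed
  then show ?thesis using matrix_left_invertible_ker invertible_left_inverse by blast
qed

end


lemma smooth_div3: "open U \<Longrightarrow> smooth_on U f \<Longrightarrow> smooth_on U (\<lambda>z. - f z / 3)"
proof -
  assume "open U" "smooth_on U f"
  then have "smooth_on U (\<lambda>z. (-1/3) * f z)" by (intro smooth_mult smooth_const)
  moreover have "(\<lambda>z. (-1/3) * f z) = (\<lambda>z. - f z / 3)" by auto
  ultimately show ?thesis by simp
qed

lemma pd_div3:
  fixes f :: "real^'n::finite \<Rightarrow> real"
  assumes "f differentiable (at y)"
  shows "pd i (\<lambda>z. - f z / 3) y = - pd i f y / 3"
proof -
  have "((\<lambda>u. - u / 3) has_real_derivative (-1/3)) (at (f y))"
    by (auto intro!: derivative_eq_intros)
  from pd_comp[OF assms this] show ?thesis by simp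
qed

lemma pd_expdiv3:
  fixes f :: "real^'n::finite \<Rightarrow> real"
  assumes "f differentiable (at y)"
  shows "pd i (\<lambda>z. exp (- f z / 3)) y = exp (- f y / 3) * (- pd i f y / 3)"
proof -
  have "((\<lambda>u. exp (- u / 3)) has_real_derivative exp (- f y / 3) * (-1/3)) (at (f y))"
    by (auto intro!: derivative_eq_intros)
  from pd_comp[OF assms this] show ?thesis by simp
qed

lemma sum_axis_l: "(\<Sum>i\<in>UNIV. (axis b (1::real))$i * f i) = f b"
proof -
  have "(\<Sum>i\<in>UNIV. (axis b (1::real))$i * f i) = (\<Sum>i\<in>UNIV. if b = i then f i else 0)"
    by (intro sum.cong refl) (auto simp: axis_def)
  also have "\<dots> = f b" by (simp add: sum.delta')
  finally show ?thesis .
qed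

lemma Gmet_gen: "Gmet F q u v = (\<Sum>k\<in>UNIV. u$k * (\<Sum>l\<in>UNIV. pd k (pd l F) q * v$l))"
  unfolding Gmet_def by (simp add: sum_distrib_left mult_ac)

lemma Gmet_gen2: "Gmet F q u v = (\<Sum>l\<in>UNIV. v$l * (\<Sum>k\<in>UNIV. pd k (pd l F) q * u$k))"
  unfolding Gmet_def by (subst sum.swap) (simp add: sum_distrib_left mult_ac)

lemma Gmet_diff: "Gmet F q (u - u') v = Gmet F q u v - Gmet F q u' v"
  unfolding Gmet_def by (simp add: sum_subtractf algebra_simps)

lemma Yuk3_gen: "Yuk3 F x u v z = (\<Sum>i\<in>UNIV. u$i * (\<Sum>j\<in>UNIV. v$j * (\<Sum>m\<in>UNIV. z$m * Yukawa F x i j m)))"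
  unfolding Yuk3_def by (simp add: sum_distrib_left mult_ac)

lemma pd_cmult:
  fixes f :: "real^'n::finite \<Rightarrow> real"
  assumes "f differentiable (at y)"
  shows "pd i (\<lambda>z. f z * c) y = pd i f y * c"
proof -
  have "(\<lambda>z. c) differentiable (at y)" by simp
  from pd_mult[OF assms this, of i] show ?thesis by (simp add: pd_const)
qed

lemma mexp:
  fixes A B H K :: "real^'n::finite^'n"
  assumes KH: "K ** H = mat 1" and HK: "H ** K = mat 1"
  shows "(A - c1 *\<^sub>R H) ** K ** (B - c2 *\<^sub>R H) = A ** K ** B - c2 *\<^sub>R A - c1 *\<^sub>R B + (c1 * c2) *\<^sub>R H"
proof -
  have 1: "(A - c1 *\<^sub>R H) ** K = A ** K - c1 *\<^sub>R mat 1" by (simp add: mm_diff_r mm_scale_l HK)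
  have 2: "A ** K ** H = A" by (simp add: KH flip: matrix_mul_assoc)
  have "(A ** K - c1 *\<^sub>R mat 1) ** (B - c2 *\<^sub>R H) = A ** K ** B - c2 *\<^sub>R (A ** K ** H) - c1 *\<^sub>R B + (c1 * c2) *\<^sub>R H"
    by (simp add: mm_diff_r mm_diff_l mm_scale_l mm_scale_r algebra_simps)
  then show ?thesis unfolding 1 2 .
qed

lemma mscale3:
  fixes A B K :: "real^'n::finite^'n"
  assumes "c \<noteq> 0"
  shows "(c *\<^sub>R A) ** ((1/c) *\<^sub>R K) ** (c *\<^sub>R B) = c *\<^sub>R (A ** K ** B)"
  using assms by (simp add: mm_scale_l mm_scale_r)

lemma pd_cmult':
  fixes f :: "real^'n::finite \<Rightarrow> real"
  assumes "f differentiable (at y)"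
  shows "pd i (\<lambda>z. c * f z) y = c * pd i f y"
  using pd_cmult[OF assms, of i c] by (simp add: mult.commute)

context
  fixes Vol :: "real^'n::finite \<Rightarrow> real" and U :: "(real^'n) set"
  assumes U_open: "open U"
    and U_cone: "\<And>x t. x \<in> U \<Longrightarrow> t > 0 \<Longrightarrow> t *\<^sub>R x \<in> U"
    and Vol_pos: "\<And>x. x \<in> U \<Longrightarrow> Vol x > 0"
    and Vol_smooth: "smooth_on U Vol"
    and Vol_homog: "\<And>x t. x \<in> U \<Longrightarrow> t > 0 \<Longrightarrow> Vol (t *\<^sub>R x) = t powr (7/3) * Vol x"
    and G_posdef: "\<And>x v. x \<in> U \<Longrightarrow> v \<noteq> 0 \<Longrightarrow> Gmet (potF Vol) x v v > 0"
begin

abbreviation "FF \<equiv> potF Vol"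

lemmas ctx = U_open U_cone Vol_pos Vol_smooth Vol_homog G_posdef

lemma Fs: "smooth_on U FF" by (rule F_smooth[OF ctx])
lemma Fs1: "smooth_on U (pd i FF)" by (rule sm1[OF ctx])
lemma Fs2: "smooth_on U (pd i (pd j FF))" by (rule sm2[OF ctx])
lemma Fs3: "smooth_on U (pd i (pd j (pd k FF)))" by (rule sm3[OF ctx])

lemma es: "smooth_on U (\<lambda>z. exp (- FF z / 3))"
  by (intro smooth_exp[OF U_open] smooth_div3[OF U_open] Fs)

lemma cs: "smooth_on U (\<lambda>z. exp (- FF z / 3) * pd k (pd l FF) z)"
  by (intro smooth_mult[OF U_open] es Fs2)

lemma qPhi_eq: "qPhi FF = (\<lambda>z. \<chi> k l. exp (- FF z / 3) * pd k (pd l FF) z)"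
  by (rule ext) (simp add: qPhi_def)

lemma pd_e: "y \<in> U \<Longrightarrow> pd i (\<lambda>z. exp (- FF z / 3)) y = exp (- FF y / 3) * (- pd i FF y / 3)"
  by (rule pd_expdiv3[OF smooth_diff[OF Fs]])

definition "dQ i k l z = exp (- FF z / 3) * (- pd i FF z / 3) * pd k (pd l FF) z
                      + exp (- FF z / 3) * pd i (pd k (pd l FF)) z"

lemma dQs: "smooth_on U (dQ i k l)"
proof -
  have "smooth_on U (\<lambda>z. exp (- FF z / 3) * (- pd i FF z / 3) * pd k (pd l FF) z
                      + exp (- FF z / 3) * pd i (pd k (pd l FF)) z)"
    by (intro smooth_add[OF U_open] smooth_mult[OF U_open] es smooth_div3[OF U_open] Fs1 Fs2 Fs3)
  then show ?thesis unfolding dQ_def[abs_def] .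
qed

lemma pdQ:
  assumes y: "y \<in> U"
  shows "pd i (qPhi FF) y = (\<chi> k l. dQ i k l y)"
proof -
  have "pd i (qPhi FF) y = (\<chi> k l. pd i (\<lambda>z. exp (- FF z / 3) * pd k (pd l FF) z) y)"
    unfolding qPhi_eq by (rule pd_mat) (rule smooth_diff[OF cs y])
  also have "\<dots> = (\<chi> k l. dQ i k l y)"
  proof -
    have "pd i (\<lambda>z. exp (- FF z / 3) * pd k (pd l FF) z) y = dQ i k l y" for k l
      unfolding dQ_def
      using pd_mult[OF smooth_diff[OF es y] smooth_diff[OF Fs2 y]] pd_e[OF y] by simp
    then show ?thesis by simp
  qed
  finally show ?thesis .
qed

lemma pdpdQ:
  assumes x: "x \<in> U"
  shows "pd a (pd b (qPhi FF)) x = (\<chi> k l.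
     (exp (- FF x / 3) * (- pd a FF x / 3) * (- pd b FF x / 3) + exp (- FF x / 3) * (- pd a (pd b FF) x / 3)) * pd k (pd l FF) x
     + exp (- FF x / 3) * (- pd b FF x / 3) * pd a (pd k (pd l FF)) x
     + (exp (- FF x / 3) * (- pd a FF x / 3) * pd b (pd k (pd l FF)) x
        + exp (- FF x / 3) * pd a (pd b (pd k (pd l FF))) x))"
proof -
  have "pd a (pd b (qPhi FF)) x = pd a (\<lambda>z. \<chi> k l. dQ b k l z) x"
    by (rule pd_local[OF U_open x]) (rule pdQ)
  also have "\<dots> = (\<chi> k l. pd a (dQ b k l) x)"
    by (rule pd_mat) (rule smooth_diff[OF dQs x])
  also have "\<dots> = (\<chi> k l.
     (exp (- FF x / 3) * (- pd a FF x / 3) * (- pd b FF x / 3) + exp (- FF x / 3) * (- pd a (pd b FF) x / 3)) * pd k (pd l FF) x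
     + exp (- FF x / 3) * (- pd b FF x / 3) * pd a (pd k (pd l FF)) x
     + (exp (- FF x / 3) * (- pd a FF x / 3) * pd b (pd k (pd l FF)) x
        + exp (- FF x / 3) * pd a (pd b (pd k (pd l FF))) x))"
  proof -
    have de: "(\<lambda>z. exp (- FF z / 3)) differentiable (at x)" by (rule smooth_diff[OF es x])
    have d1: "(\<lambda>z. - pd b FF z / 3) differentiable (at x)" by (rule smooth_diff[OF smooth_div3[OF U_open Fs1] x])
    have d2: "pd k (pd l FF) differentiable (at x)" for k l by (rule smooth_diff[OF Fs2 x])
    have d3: "pd b (pd k (pd l FF)) differentiable (at x)" for k l by (rule smooth_diff[OF Fs3 x])
    have dm: "(\<lambda>z. exp (- FF z / 3) * (- pd b FF z / 3)) differentiable (at x)"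
      using de d1 by (rule differentiable_mult)
    have "pd a (dQ b k l) x =
     (exp (- FF x / 3) * (- pd a FF x / 3) * (- pd b FF x / 3) + exp (- FF x / 3) * (- pd a (pd b FF) x / 3)) * pd k (pd l FF) x
     + exp (- FF x / 3) * (- pd b FF x / 3) * pd a (pd k (pd l FF)) x
     + (exp (- FF x / 3) * (- pd a FF x / 3) * pd b (pd k (pd l FF)) x
        + exp (- FF x / 3) * pd a (pd b (pd k (pd l FF))) x)" for k l
    proof -
      have "pd a (dQ b k l) x = pd a (\<lambda>z. exp (- FF z / 3) * (- pd b FF z / 3) * pd k (pd l FF) z) x
          + pd a (\<lambda>z. exp (- FF z / 3) * pd b (pd k (pd l FF)) z) x"
        unfolding dQ_def[abs_def]
        by (rule pd_add) (intro differentiable_mult de d1 d2 d3)+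
      also have "pd a (\<lambda>z. exp (- FF z / 3) * (- pd b FF z / 3) * pd k (pd l FF) z) x
         = pd a (\<lambda>z. exp (- FF z / 3) * (- pd b FF z / 3)) x * pd k (pd l FF) x
           + exp (- FF x / 3) * (- pd b FF x / 3) * pd a (pd k (pd l FF)) x"
        using pd_mult[OF dm d2] by simp
      also have "pd a (\<lambda>z. exp (- FF z / 3) * (- pd b FF z / 3)) x
         = exp (- FF x / 3) * (- pd a FF x / 3) * (- pd b FF x / 3) + exp (- FF x / 3) * (- pd a (pd b FF) x / 3)"
        using pd_mult[OF de d1] pd_e[OF x] pd_div3[OF smooth_diff[OF Fs1 x]] by simp
      also have "pd a (\<lambda>z. exp (- FF z / 3) * pd b (pd k (pd l FF)) z) x
         = exp (- FF x / 3) * (- pd a FF x / 3) * pd b (pd k (pd l FF)) x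
           + exp (- FF x / 3) * pd a (pd b (pd k (pd l FF))) x"
        using pd_mult[OF de d3] pd_e[OF x] by simp
      finally show ?thesis .
    qed
    then show ?thesis by simp
  qed
  finally show ?thesis .
qed


lemma pd_c:
  assumes y: "y \<in> U"
  shows "pd i (\<lambda>z. exp (- FF z / 3) * pd k (pd l FF) z) y = dQ i k l y"
  unfolding dQ_def
  using pd_mult[OF smooth_diff[OF es y] smooth_diff[OF Fs2 y]] pd_e[OF y] by simp

lemma ddG1:
  assumes y: "y \<in> U"
  shows "dirderiv (\<lambda>q. Gmet FF q (axis b 1) Z) y (axis a 1) = (\<Sum>l\<in>UNIV. pd a (pd b (pd l FF)) y * Z$l)"
proof -
  have e: "(\<lambda>q. Gmet FF q (axis b 1) Z) = (\<lambda>q. \<Sum>l\<in>UNIV. pd b (pd l FF) q * Z$l)"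
    by (rule ext) (simp add: Gmet_gen sum_axis_l)
  have "dirderiv (\<lambda>q. Gmet FF q (axis b 1) Z) y (axis a 1) = pd a (\<lambda>q. \<Sum>l\<in>UNIV. pd b (pd l FF) q * Z$l) y"
    unfolding pd_def e ..
  also have "\<dots> = (\<Sum>l\<in>UNIV. pd a (\<lambda>q. pd b (pd l FF) q * Z$l) y)"
    by (rule pd_sum) (auto intro!: differentiable_mult smooth_diff[OF Fs2 y])
  also have "\<dots> = (\<Sum>l\<in>UNIV. pd a (pd b (pd l FF)) y * Z$l)"
    by (intro sum.cong refl pd_cmult smooth_diff[OF Fs2 y])
  finally show ?thesis .
qed

lemma ddG3:
  assumes y: "y \<in> U"
  shows "dirderiv (\<lambda>q. Gmet FF q (axis a 1) (axis b 1)) y Z = (\<Sum>i\<in>UNIV. Z$i * pd i (pd a (pd b FF)) y)"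
proof -
  have e: "(\<lambda>q. Gmet FF q (axis a 1) (axis b 1)) = pd a (pd b FF)"
    by (rule ext) (simp add: Gmet_gen sum_axis_l mult.commute)
  show ?thesis unfolding e using dirderiv_sum[OF smooth_diff[OF Fs2 y]] by simp
qed

lemma nablaG_eq:
  assumes x: "x \<in> U"
  shows "nablaG FF x a b = matrix_inv (\<chi> i j. pd i (pd j FF) x) *v (\<chi> l. pd a (pd b (pd l FF)) x / 2)"
proof -
  define H where "H = (\<chi> i j. pd i (pd j FF) x)"
  define \<xi> where "\<xi> = (\<chi> l. pd a (pd b (pd l FF)) x / 2)"
  define w where "w = matrix_inv H *v \<xi>"
  have Hinv: "invertible H" unfolding H_def by (rule H_inv[OF ctx x])
  have Hw: "H *v w = \<xi>" unfolding w_def by (simp add: matrix_vector_mul_assoc minv_works(1)[OF Hinv])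
  let ?K = "\<lambda>Z. (dirderiv (\<lambda>q. Gmet FF q (axis b 1) Z) x (axis a 1) + dirderiv (\<lambda>q. Gmet FF q (axis a 1) Z) x (axis b 1)
      - dirderiv (\<lambda>q. Gmet FF q (axis a 1) (axis b 1)) x Z) / 2"
  have wK: "Gmet FF x w Z = ?K Z" for Z
  proof -
    have "?K Z = ((\<Sum>l\<in>UNIV. pd a (pd b (pd l FF)) x * Z$l) + (\<Sum>l\<in>UNIV. pd b (pd a (pd l FF)) x * Z$l)
          - (\<Sum>i\<in>UNIV. Z$i * pd i (pd a (pd b FF)) x)) / 2"
      unfolding ddG1[OF x] ddG3[OF x] ..
    also have "\<dots> = (\<Sum>l\<in>UNIV. Z$l * \<xi>$l)"
    proof -
      have s1: "pd b (pd a (pd l FF)) x = pd a (pd b (pd l FF)) x" for l by (rule sym3a[OF ctx x])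
      have s2: "pd l (pd a (pd b FF)) x = pd a (pd b (pd l FF)) x" for l
        using sym3a[OF ctx x, of l a b] sym3b[OF ctx x, of a l b] by simp
      have c: "(\<Sum>l\<in>UNIV. pd a (pd b (pd l FF)) x * Z$l) = (\<Sum>l\<in>UNIV. Z$l * pd a (pd b (pd l FF)) x)"
        by (simp add: mult.commute)
      have d: "(\<Sum>l\<in>UNIV. Z$l * (pd a (pd b (pd l FF)) x / 2)) = (\<Sum>l\<in>UNIV. Z$l * pd a (pd b (pd l FF)) x) / 2"
        by (simp add: sum_divide_distrib)
      show ?thesis unfolding \<xi>_def s1 s2 c by (simp add: sum_divide_distrib[symmetric])
    qed
    also have "\<dots> = Gmet FF x w Z"
    proof -
      have "\<xi>$l = (\<Sum>k\<in>UNIV. pd k (pd l FF) x * w$k)" for l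
      proof -
        have "\<xi>$l = (H *v w)$l" using Hw by simp
        also have "\<dots> = (\<Sum>k\<in>UNIV. pd l (pd k FF) x * w$k)" unfolding H_def matrix_vector_mult_def by simp
        also have "\<dots> = (\<Sum>k\<in>UNIV. pd k (pd l FF) x * w$k)" using sym2[OF ctx x] by simp
        finally show ?thesis .
      qed
      then show ?thesis unfolding Gmet_gen2 by simp
    qed
    finally show ?thesis by simp
  qed
  have uniq: "w' = w" if "w' \<in> UNIV \<and> (\<forall>Z\<in>UNIV. Gmet FF x w' Z = ?K Z)" for w'
  proof (rule ccontr)
    assume ne: "w' \<noteq> w"
    have "Gmet FF x w' (w' - w) = ?K (w' - w)" using that by blast
    moreover have "Gmet FF x w (w' - w) = ?K (w' - w)" using wK by blast
    ultimately have "Gmet FF x (w' - w) (w' - w) = 0" unfolding Gmet_diff by simp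
    moreover have "Gmet FF x (w' - w) (w' - w) > 0" using G_posdef[OF x] ne by simp
    ultimately show False by simp
  qed
  have "christoffel UNIV (Gmet FF) x (axis a 1) (axis b 1) = w"
    unfolding christoffel_def by (rule the_equality) (use wK uniq in auto)
  then show ?thesis unfolding nablaG_def w_def H_def \<xi>_def .
qed


theorem main_ctx:
  assumes x: "x \<in> U"
  shows "pullback_LC Sym2 gS2 (qPhi FF) (pd b (qPhi FF)) a x
     = dirderiv (qPhi FF) x (nablaG FF x a b)
       + (2 * exp (- FF x / 3)) *\<^sub>R (\<chi> k l. nablaG_Yukawa FF x a b k l)"
proof -
  define \<phi> where "\<phi> = exp (- FF x / 3)"
  define g where "g = (\<chi> i. pd i FF x)"
  define H where "H = (\<chi> i j. pd i (pd j FF) x)"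
  define T where "T = (\<lambda>i j k. pd i (pd j (pd k FF)) x)"
  define Tm where "Tm = (\<lambda>i. \<chi> k l. T i k l)"
  define W where "W = (\<chi> k l. pd a (pd b (pd k (pd l FF))) x)"
  define K where "K = matrix_inv H"
  define Q where "Q = qPhi FF"
  have \<phi>0: "\<phi> > 0" unfolding \<phi>_def by simp
  have Hinv: "invertible H" unfolding H_def by (rule H_inv[OF ctx x])
  have KH: "K ** H = mat 1" and HK: "H ** K = mat 1" unfolding K_def using minv_works[OF Hinv] by auto
  have Hsym: "H$i$j = H$j$i" for i j unfolding H_def using sym2[OF ctx x] by simp
  have Hs: "transpose H = H" using Hsym by (simp add: transpose_def vec_eq_iff)
  have Ks: "transpose K = K" unfolding K_def by (rule minv_sym[OF Hinv Hs])
  have Ksym: "K$i$j = K$j$i" for i j using arg_cong[OF Ks, of "\<lambda>M. M$j$i"] by (simp add: transpose_def)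
  have T1: "T i j k = T j i k" for i j k unfolding T_def by (rule sym3a[OF ctx x])
  have T2: "T i j k = T i k j" for i j k unfolding T_def by (rule sym3b[OF ctx x])
  have Tms: "transpose (Tm i) = Tm i" for i unfolding Tm_def using T2 by (simp add: transpose_def vec_eq_iff)
  have Xm: "pd m Q x = \<phi> *\<^sub>R (Tm m - (g$m / 3) *\<^sub>R H)" for m
    unfolding Q_def pdQ[OF x] by (simp add: vec_eq_iff dQ_def \<phi>_def Tm_def T_def g_def H_def algebra_simps)
  have Qx: "Q x = \<phi> *\<^sub>R H" unfolding Q_def by (simp add: qPhi_def vec_eq_iff \<phi>_def H_def)
  have Pinv: "matrix_inv (Q x) = (1/\<phi>) *\<^sub>R K" unfolding Qx K_def using minv_scale[OF Hinv] \<phi>0 by simp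
  have Qab: "pd a (pd b Q) x = \<phi> *\<^sub>R (W - (H$a$b/3) *\<^sub>R H - (g$b/3) *\<^sub>R Tm a - (g$a/3) *\<^sub>R Tm b + (g$a * g$b/9) *\<^sub>R H)"
    unfolding Q_def pdpdQ[OF x] by (simp add: vec_eq_iff \<phi>_def Tm_def T_def g_def H_def W_def algebra_simps)
  have QinvS: "invertible (Q x)" unfolding Qx using scalar_invertible[OF _ Hinv] \<phi>0 by simp
  have QS: "transpose (Q x) = Q x" unfolding Qx using Hs by (simp add: transpose_def vec_eq_iff)
  have XS: "pd m Q x \<in> Sym2" for m
    unfolding Sym2_iff Xm using Tms[of m] Hsym by (simp add: transpose_def vec_eq_iff Tm_def)
  have Chr: "christoffel Sym2 gS2 (Q x) (pd a Q x) (pd b Q x)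
     = (-(1/2)) *\<^sub>R (pd a Q x ** matrix_inv (Q x) ** pd b Q x + pd b Q x ** matrix_inv (Q x) ** pd a Q x)"
    by (rule christoffel_gS2[OF QinvS QS XS XS])
  have prod: "pd c Q x ** matrix_inv (Q x) ** pd d Q x
      = \<phi> *\<^sub>R (Tm c ** K ** Tm d - (g$d/3) *\<^sub>R Tm c - (g$c/3) *\<^sub>R Tm d + (g$c * g$d / 9) *\<^sub>R H)" for c d
    unfolding Xm Pinv mscale3[OF \<phi>0[THEN less_imp_neq, symmetric]] mexp[OF KH HK] by simp
  have LHS: "pullback_LC Sym2 gS2 Q (pd b Q) a x
      = \<phi> *\<^sub>R (W - (H$a$b/3) *\<^sub>R H - (1/2) *\<^sub>R (Tm a ** K ** Tm b + Tm b ** K ** Tm a))"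
    unfolding pullback_LC_def Chr prod Qab by (simp add: vec_eq_iff algebra_simps)
  have wk: "nablaG FF x a c = K *v (\<chi> l. T a c l / 2)" for c
    unfolding nablaG_eq[OF x] K_def H_def T_def ..
  define w where "w = nablaG FF x a b"
  have wcomp: "(nablaG FF x a c)$j = (\<Sum>p\<in>UNIV. K$j$p * (T a c p / 2))" for c j
    unfolding wk by (simp add: matrix_vector_mult_def)
  have DQ: "dirderiv Q x w = (\<chi> k l. \<Sum>m\<in>UNIV. w$m * (\<phi> * (- g$m / 3) * H$k$l + \<phi> * T m k l))"
  proof -
    have "dirderiv Q x w = (\<chi> k l. dirderiv (\<lambda>z. exp (- FF z / 3) * pd k (pd l FF) z) x w)"
      unfolding Q_def qPhi_eq by (rule dirderiv_mat) (rule smooth_diff[OF cs x])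
    also have "\<dots> = (\<chi> k l. \<Sum>m\<in>UNIV. w$m * (\<phi> * (- g$m / 3) * H$k$l + \<phi> * T m k l))"
    proof -
      have "dirderiv (\<lambda>z. exp (- FF z / 3) * pd k (pd l FF) z) x w
         = (\<Sum>m\<in>UNIV. w$m * (\<phi> * (- g$m / 3) * H$k$l + \<phi> * T m k l))" for k l
        using dirderiv_sum[OF smooth_diff[OF cs x], of k l w] pd_c[OF x]
        by (simp add: dQ_def \<phi>_def g_def H_def T_def)
      then show ?thesis by simp
    qed
    finally show ?thesis .
  qed
  have NY: "nablaG_Yukawa FF x a b k l = W$k$l / 2 - (\<Sum>i\<in>UNIV. w$i * (T i k l / 2))
      - (\<Sum>j\<in>UNIV. (nablaG FF x a k)$j * (T b j l / 2)) - (\<Sum>m\<in>UNIV. (nablaG FF x a l)$m * (T b k m / 2))" for k l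
  proof -
    have "pd a (\<lambda>y. Yukawa FF y b k l) x = W$k$l / 2"
    proof -
      have "pd a (\<lambda>y. Yukawa FF y b k l) x = pd a (\<lambda>y. (1/2) * pd b (pd k (pd l FF)) y) x"
        unfolding Yukawa_def ..
      also have "\<dots> = (1/2) * pd a (pd b (pd k (pd l FF))) x" by (rule pd_cmult'[OF smooth_diff[OF Fs3 x]])
      finally show ?thesis unfolding W_def by simp
    qed
    then show ?thesis
      unfolding nablaG_Yukawa_def Yuk3_gen sum_axis_l w_def by (simp add: Yukawa_def T_def mult_ac)
  qed
  have Hx: "H *v x = - g"
    using euler1[OF ctx x] unfolding H_def g_def by (simp add: matrix_vector_mult_def vec_eq_iff mult_ac)
  have Kg: "K *v g = - x"
  proof -
    have "K *v (H *v x) = x" by (simp add: matrix_vector_mul_assoc KH)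
    then have "K *v (- g) = x" using Hx by simp
    then show ?thesis using matrix_vector_mult_diff_distrib[of K 0 g] by (simp add: eq_neg_iff_add_eq_0 add.commute)
  qed
  have E2: "(\<Sum>m\<in>UNIV. x$m * T a b m) = - 2 * H$a$b"
  proof -
    have "(\<Sum>m\<in>UNIV. x$m * T a b m) = (\<Sum>m\<in>UNIV. x$m * pd b (pd a (pd m FF)) x)"
      using T1 unfolding T_def by metis
    also have "\<dots> = - (pd a (pd b FF) x + pd b (pd a FF) x)" by (rule euler2[OF ctx x])
    also have "\<dots> = - 2 * H$a$b" using Hsym[of a b] unfolding H_def by simp
    finally show ?thesis .
  qed
  have Eul: "(\<Sum>m\<in>UNIV. w$m * g$m) = H$a$b"
  proof -
    have "(\<Sum>m\<in>UNIV. w$m * g$m) = (\<Sum>m\<in>UNIV. \<Sum>p\<in>UNIV. K$m$p * (T a b p / 2) * g$m)"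
      unfolding w_def wcomp by (simp add: sum_distrib_right)
    also have "\<dots> = (\<Sum>p\<in>UNIV. (T a b p / 2) * (\<Sum>m\<in>UNIV. K$p$m * g$m))"
      by (subst sum.swap) (simp add: sum_distrib_left Ksym mult_ac)
    also have "\<dots> = (\<Sum>p\<in>UNIV. (T a b p / 2) * (- x$p))"
    proof -
      have "(\<Sum>m\<in>UNIV. K$p$m * g$m) = - x$p" for p
        using arg_cong[OF Kg, of "\<lambda>v. v$p"] by (simp add: matrix_vector_mult_def)
      then show ?thesis by simp
    qed
    also have "\<dots> = - (\<Sum>m\<in>UNIV. x$m * T a b m) / 2"
      by (simp add: sum_negf sum_divide_distrib mult_ac)
    finally show ?thesis using E2 by simp
  qed
  have KS1: "(\<Sum>j\<in>UNIV. (nablaG FF x a k)$j * (T b j l / 2)) = (1/4) * (Tm a ** K ** Tm b)$k$l" for k l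
  proof -
    have "(\<Sum>j\<in>UNIV. (nablaG FF x a k)$j * (T b j l / 2)) = (\<Sum>j\<in>UNIV. \<Sum>p\<in>UNIV. K$j$p * T a k p * T b j l / 4)"
      unfolding wcomp by (simp add: sum_distrib_right sum_divide_distrib)
    also have "\<dots> = (\<Sum>j\<in>UNIV. \<Sum>p\<in>UNIV. T a k p * K$p$j * T b j l / 4)"
    proof (intro sum.cong refl)
      fix j p show "K$j$p * T a k p * T b j l / 4 = T a k p * K$p$j * T b j l / 4"
        using Ksym[of j p] by (simp add: mult_ac)
    qed
    also have "\<dots> = (1/4) * (Tm a ** K ** Tm b)$k$l"
      by (simp add: matrix_matrix_mult_def Tm_def sum_distrib_left sum_distrib_right sum_divide_distrib mult_ac)
    finally show ?thesis .
  qed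
  have KS2: "(\<Sum>m\<in>UNIV. (nablaG FF x a l)$m * (T b k m / 2)) = (1/4) * (Tm b ** K ** Tm a)$k$l" for k l
  proof -
    have "(\<Sum>m\<in>UNIV. (nablaG FF x a l)$m * (T b k m / 2)) = (\<Sum>m\<in>UNIV. \<Sum>p\<in>UNIV. K$m$p * T a l p * T b k m / 4)"
      unfolding wcomp by (simp add: sum_distrib_right sum_divide_distrib)
    also have "\<dots> = (\<Sum>p\<in>UNIV. \<Sum>m\<in>UNIV. T b k m * K$m$p * T a p l / 4)"
      by (subst sum.swap) (intro sum.cong refl, simp add: T2[of a l] mult_ac)
    also have "\<dots> = (1/4) * (Tm b ** K ** Tm a)$k$l"
      by (simp add: matrix_matrix_mult_def Tm_def sum_distrib_left sum_distrib_right sum_divide_distrib mult_ac)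
    finally show ?thesis .
  qed
  have RHSkl: "(dirderiv Q x w + (2 * \<phi>) *\<^sub>R (\<chi> k l. nablaG_Yukawa FF x a b k l))$k$l
      = \<phi> * (W$k$l - (H$a$b/3) * H$k$l - (1/2) * ((Tm a ** K ** Tm b)$k$l + (Tm b ** K ** Tm a)$k$l))" for k l
  proof -
    have s1: "(\<Sum>m\<in>UNIV. w$m * (\<phi> * (- g$m / 3) * H$k$l + \<phi> * T m k l))
       = - (\<phi> / 3) * H$k$l * (\<Sum>m\<in>UNIV. w$m * g$m) + \<phi> * (\<Sum>m\<in>UNIV. w$m * T m k l)"
    proof -
      have "(\<Sum>m\<in>UNIV. w$m * (\<phi> * (- g$m / 3) * H$k$l + \<phi> * T m k l))
          = (\<Sum>m\<in>UNIV. (- (\<phi> / 3) * H$k$l) * (w$m * g$m) + \<phi> * (w$m * T m k l))"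
        by (intro sum.cong refl) (simp add: algebra_simps)
      also have "\<dots> = - (\<phi> / 3) * H$k$l * (\<Sum>m\<in>UNIV. w$m * g$m) + \<phi> * (\<Sum>m\<in>UNIV. w$m * T m k l)"
        by (simp only: sum.distrib sum_distrib_left[symmetric])
      finally show ?thesis .
    qed
    have s2: "(\<Sum>i\<in>UNIV. w$i * (T i k l / 2)) = (\<Sum>m\<in>UNIV. w$m * T m k l) / 2"
      by (simp add: sum_divide_distrib)
    have "(dirderiv Q x w + (2 * \<phi>) *\<^sub>R (\<chi> k l. nablaG_Yukawa FF x a b k l))$k$l
        = (\<Sum>m\<in>UNIV. w$m * (\<phi> * (- g$m / 3) * H$k$l + \<phi> * T m k l)) + (2 * \<phi>) * nablaG_Yukawa FF x a b k l"
      unfolding DQ by simp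
    also have "\<dots> = - (\<phi> / 3) * H$k$l * H$a$b + \<phi> * (\<Sum>m\<in>UNIV. w$m * T m k l)
        + (2 * \<phi>) * (W$k$l / 2 - (\<Sum>m\<in>UNIV. w$m * T m k l) / 2
             - (1/4) * (Tm a ** K ** Tm b)$k$l - (1/4) * (Tm b ** K ** Tm a)$k$l)"
      unfolding s1 NY[of k l] s2 KS1[where k=k and l=l] KS2[where k=k and l=l] Eul ..
    also have "\<dots> = \<phi> * (W$k$l - (H$a$b/3) * H$k$l - (1/2) * ((Tm a ** K ** Tm b)$k$l + (Tm b ** K ** Tm a)$k$l))"
      by (simp add: algebra_simps)
    finally show ?thesis .
  qed
  show ?thesis
    unfolding Q_def[symmetric] LHS w_def[symmetric] \<phi>_def[symmetric]
    using RHSkl by (simp add: vec_eq_iff)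
qed

end


theorem mainTheorem18:
  fixes Vol :: "real^'n::finite \<Rightarrow> real" and U :: "(real^'n) set"
  assumes U_open: "open U"
    and U_cone: "\<And>x t. x \<in> U \<Longrightarrow> t > 0 \<Longrightarrow> t *\<^sub>R x \<in> U"
    and Vol_pos: "\<And>x. x \<in> U \<Longrightarrow> Vol x > 0"
    and Vol_smooth: "smooth_on U Vol"
    and Vol_homog: "\<And>x t. x \<in> U \<Longrightarrow> t > 0 \<Longrightarrow> Vol (t *\<^sub>R x) = t powr (7/3) * Vol x"
    and G_posdef: "\<And>x v. x \<in> U \<Longrightarrow> v \<noteq> 0 \<Longrightarrow> Gmet (potF Vol) x v v > 0"
    and x_in: "x \<in> U"
  shows "pullback_LC Sym2 gS2 (qPhi (potF Vol)) (pd b (qPhi (potF Vol))) a x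
     = dirderiv (qPhi (potF Vol)) x (nablaG (potF Vol) x a b)
       + (2 * exp (- potF Vol x / 3)) *\<^sub>R (\<chi> k l. nablaG_Yukawa (potF Vol) x a b k l)"
  by (rule main_ctx[OF U_open U_cone Vol_pos Vol_smooth Vol_homog G_posdef x_in])

end
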